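(* Let $k$ be an ordered blueprint and $B$ an ordered blue $k$-algebra, and let $v_0:\mathbb F_1\to\mathbb B$ be the trivial valuation. Then there is a canonical isomorphism of semirings $\mathrm{An}(B,k)\simeq\mathrm{Bend}_{v_0}(B^{\mathrm{mon}}_{k\le1})^+$, and $\mathrm{An}(B,k)$ represents $\mathrm{Val}(B,k;-)$: for every idempotent semiring $S$ the map $\mathrm{Hom}(\mathrm{An}(B,k),S)\to\mathrm{Val}(B,k;S)$, $f\mapsto (a\mapsto f(\langle a\rangle))$, is a bijection natural in $S$.
   Context: Ordered blueprints: a pair of an ordered semiring $B^+$ (commutative with $0,1$, partial order compatible with $+$ and $\cdot$) and a multiplicatively closed subset $B^\bullet\ni0,1$ generating $B^+$; morphisms are order-preserving semiring homomorphisms preserving $\bullet$. Semirings are viewed as trivially ordered blueprints with $S^\bullet=S$. An ordered blue $k$-algebra is a morphism $k\to B$; write $\bar a$ for the image of $a\in k^\bullet$. $\mathbb F_1$ is the ordered blueprint with $\mathbb F_1^\bullet=\{0,1\}$, $\mathbb F_1^+=\mathbb N$, trivially ordered (initial ordered blueprint); $\mathbb B$ is the Boolean semifield $\{0,1\}$ with $1+1=1$, trivially ordered; $v_0(0)=0$, $v_0(1)=1$. $k$-spans: a $k$-span in $B$ is a subset $M\subset B^\bullet$ closed under multiplication by (images of) elements of $k^\bullet$ and containing every $b\in B^\bullet$ for which there are $a_i\in M$ with $b\le\sum a_i$ in $B^+$. $\langle a_1,\dots\rangle$ is the smallest $k$-span containing the $a_i$; a $k$-span is finitely generated if it equals $\langle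 a_1,\dots,a_n\rangle$ for finitely many $a_i$. $\mathrm{An}(B,k)$ is the set of finitely generated $k$-spans with $M_1+M_2=\{m: m\le m_1+m_2$ in $B^+$ for some $m_i\in M_i\}$ and $M_1\cdot M_2=\{m_1m_2: m_i\in M_i\}$; it is an idempotent semiring. A valuation $w:B\to S$ into an idempotent semiring $S$ is a multiplicative map $B^\bullet\to S$ with $w(0)=0$, $w(1)=1$ such that $a\le\sum b_j$ in $B^+$ ($a,b_j\in B^\bullet$) implies $w(a)+\sum w(b_j)=\sum w(b_j)$; it is integral on $k$ if $w(\bar a)+1=1$ for all $a\in k^\bullet$. $\mathrm{Val}(B,k;S)$ is the set of such valuations. $B^{\mathrm{mon}}$ has underlying monoid $B^\bullet$ and semiring $\mathbb N[B^\bullet]$ (zero of $B^\bullet$ identified with $0$), ordered by the order generated by the relations $a\le\sum b_j$ ($a,b_j\in B^\bullet$) holding in $B^+$. $B^{\mathrm{mon}}_{k\le1}$ is $B^{\mathrm{mon}}$ with the additional relations $\bar a\le 1$ for all $a\in k^\bullet$ imposed. For an ordered blueprint $C$, $\mathrm{Bend}_{v_0}(C)$ is the ordered blue $\mathbb B$-algebra with underlying monoid $C^\bullet$ whose semiring $\mathrm{Bend}_{v_0}(C)^+$ is the quotient of $\mathbb B[C^\bullet]^+$ (zero identified) by the congruence generated by $a+\sum b_j=\sum b_j$ for all relations $a\le\sum b_j$ in $C^+$ with $a,b_j\in C^\bullet$. *)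

theory Defs
  imports "HOL-Library.Multiset" "HOL-Library.FuncSet"
begin

record 'a srng =
  car :: "'a set"
  add :: "'a \<Rightarrow> 'a \<Rightarrow> 'a"
  mul :: "'a \<Rightarrow> 'a \<Rightarrow> 'a"
  zer :: 'a
  one :: 'a

definition comm_srng :: "('a, 'm) srng_scheme \<Rightarrow> bool" where
  "comm_srng R \<longleftrightarrow>
     zer R \<in> car R \<and> one R \<in> car R \<and>
     (\<forall>x\<in>car R. \<forall>y\<in>car R. add R x y \<in> car R \<and> mul R x y \<in> car R) \<and>
     (\<forall>x\<in>car R. \<forall>y\<in>car R. \<forall>z\<in>car R.
        add R (add R x y) z = add R x (add R y z) \<and>
        mul R (mul R x y) z = mul R x (mul R y z) \<and>
        mul R x (add R y z) = add R (mul R x y) (mul R x z)) \<and>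
     (\<forall>x\<in>car R. \<forall>y\<in>car R. add R x y = add R y x \<and> mul R x y = mul R y x) \<and>
     (\<forall>x\<in>car R. add R (zer R) x = x \<and> mul R (one R) x = x \<and> mul R (zer R) x = zer R)"

definition sumlist :: "('a, 'm) srng_scheme \<Rightarrow> 'a list \<Rightarrow> 'a" where
  "sumlist R xs = foldr (add R) xs (zer R)"

definition idem_srng :: "('a, 'm) srng_scheme \<Rightarrow> bool" where
  "idem_srng S \<longleftrightarrow> comm_srng S \<and> add S (one S) (one S) = one S"

definition srng_hom :: "('a, 'm) srng_scheme \<Rightarrow> ('b, 'n) srng_scheme \<Rightarrow> ('a \<Rightarrow> 'b) \<Rightarrow> bool" where
  "srng_hom R S f \<longleftrightarrow>
     (\<forall>x\<in>car R. f x \<in> car S) \<and> f (zer R) = zer S \<and> f (one R) = one S \<and>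
     (\<forall>x\<in>car R. \<forall>y\<in>car R. f (add R x y) = add S (f x) (f y) \<and> f (mul R x y) = mul S (f x) (f y))"

text \<open>An ordered blueprint: ordered semiring \<open>B\<^sup>+\<close> (field \<open>le\<close> is the partial order)
  together with the multiplicative subset \<open>B\<^sup>\<bullet>\<close> (field \<open>bul\<close>).\<close>
record 'a obp = "'a srng" +
  le  :: "'a \<Rightarrow> 'a \<Rightarrow> bool"
  bul :: "'a set"

definition ordered_blueprint :: "('a, 'm) obp_scheme \<Rightarrow> bool" where
  "ordered_blueprint B \<longleftrightarrow>
     comm_srng B \<and>
     (\<forall>x\<in>car B. le B x x) \<and>
     (\<forall>x\<in>car B. \<forall>y\<in>car B. le B x y \<and> le B y x \<longrightarrow> x = y) \<and>
     (\<forall>x\<in>car B. \<forall>y\<in>car B. \<forall>z\<in>car B. le B x y \<and> le B y z \<longrightarrow> le B x z) \<and>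
     (\<forall>x y. le B x y \<longrightarrow> x \<in> car B \<and> y \<in> car B) \<and>
     (\<forall>x\<in>car B. \<forall>y\<in>car B. \<forall>z\<in>car B. le B x y \<longrightarrow>
        le B (add B x z) (add B y z) \<and> le B (mul B x z) (mul B y z)) \<and>
     bul B \<subseteq> car B \<and> zer B \<in> bul B \<and> one B \<in> bul B \<and>
     (\<forall>x\<in>bul B. \<forall>y\<in>bul B. mul B x y \<in> bul B) \<and>
     (\<forall>x\<in>car B. \<exists>xs. set xs \<subseteq> bul B \<and> x = sumlist B xs)"

definition obp_hom :: "('a, 'm) obp_scheme \<Rightarrow> ('b, 'n) obp_scheme \<Rightarrow> ('a \<Rightarrow> 'b) \<Rightarrow> bool" where
  "obp_hom k B f \<longleftrightarrow> srng_hom k B f \<and>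
     (\<forall>x y. le k x y \<longrightarrow> le B (f x) (f y)) \<and> f ` bul k \<subseteq> bul B"

text \<open>Here \<open>\<alpha> : k \<rightarrow> B\<close> is the structure morphism; \<open>\<alpha> a\<close> is \<open>a\<close> bar.\<close>
definition kspan :: "('b, 'm) obp_scheme \<Rightarrow> ('k, 'n) obp_scheme \<Rightarrow> ('k \<Rightarrow> 'b) \<Rightarrow> 'b set \<Rightarrow> bool" where
  "kspan B k \<alpha> M \<longleftrightarrow> M \<subseteq> bul B \<and>
     (\<forall>a\<in>bul k. \<forall>m\<in>M. mul B (\<alpha> a) m \<in> M) \<and>
     (\<forall>b\<in>bul B. \<forall>as. set as \<subseteq> M \<and> le B b (sumlist B as) \<longrightarrow> b \<in> M)"

definition span :: "('b, 'm) obp_scheme \<Rightarrow> ('k, 'n) obp_scheme \<Rightarrow> ('k \<Rightarrow> 'b) \<Rightarrow> 'b set \<Rightarrow> 'b set" where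
  "span B k \<alpha> A = \<Inter> {M. kspan B k \<alpha> M \<and> A \<subseteq> M}"

definition An :: "('b, 'm) obp_scheme \<Rightarrow> ('k, 'n) obp_scheme \<Rightarrow> ('k \<Rightarrow> 'b) \<Rightarrow> 'b set set" where
  "An B k \<alpha> = {M. \<exists>as. set as \<subseteq> bul B \<and> M = span B k \<alpha> (set as)}"

definition An_add :: "('b, 'm) obp_scheme \<Rightarrow> 'b set \<Rightarrow> 'b set \<Rightarrow> 'b set" where
  "An_add B M1 M2 = {m \<in> bul B. \<exists>xs ys. set xs \<subseteq> M1 \<and> set ys \<subseteq> M2 \<and>
       le B m (add B (sumlist B xs) (sumlist B ys))}"

definition An_mul :: "('b, 'm) obp_scheme \<Rightarrow> 'b set \<Rightarrow> 'b set \<Rightarrow> 'b set" where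
  "An_mul B M1 M2 = {m \<in> bul B. \<exists>ps. set ps \<subseteq> M1 \<times> M2 \<and>
       le B m (sumlist B (map (\<lambda>(x, y). mul B x y) ps))}"

definition An_srng :: "('b, 'm) obp_scheme \<Rightarrow> ('k, 'n) obp_scheme \<Rightarrow> ('k \<Rightarrow> 'b) \<Rightarrow> 'b set srng" where
  "An_srng B k \<alpha> = \<lparr> car = An B k \<alpha>, add = An_add B, mul = An_mul B,
      zer = span B k \<alpha> {}, one = span B k \<alpha> {one B} \<rparr>"

definition Val :: "('b, 'm) obp_scheme \<Rightarrow> ('k, 'n) obp_scheme \<Rightarrow> ('k \<Rightarrow> 'b) \<Rightarrow> ('s, 'p) srng_scheme
                   \<Rightarrow> ('b \<Rightarrow> 's) set" where
  "Val B k \<alpha> S = {w. w \<in> extensional (bul B) \<and>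
      (\<forall>a\<in>bul B. w a \<in> car S) \<and>
      w (zer B) = zer S \<and> w (one B) = one S \<and>
      (\<forall>a\<in>bul B. \<forall>b\<in>bul B. w (mul B a b) = mul S (w a) (w b)) \<and>
      (\<forall>a bs. a \<in> bul B \<longrightarrow> set bs \<subseteq> bul B \<longrightarrow> le B a (sumlist B bs) \<longrightarrow>
          add S (w a) (sumlist S (map w bs)) = sumlist S (map w bs)) \<and>
      (\<forall>c\<in>bul k. add S (w (\<alpha> c)) (one S) = one S)}"

definition An_Hom :: "('b, 'm) obp_scheme \<Rightarrow> ('k, 'n) obp_scheme \<Rightarrow> ('k \<Rightarrow> 'b) \<Rightarrow> ('s, 'p) srng_scheme
                     \<Rightarrow> ('b set \<Rightarrow> 's) set" where
  "An_Hom B k \<alpha> S = {f. f \<in> extensional (An B k \<alpha>) \<and> srng_hom (An_srng B k \<alpha>) S f}"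

definition val_of_hom :: "('b, 'm) obp_scheme \<Rightarrow> ('k, 'n) obp_scheme \<Rightarrow> ('k \<Rightarrow> 'b)
                         \<Rightarrow> ('b set \<Rightarrow> 's) \<Rightarrow> ('b \<Rightarrow> 's)" where
  "val_of_hom B k \<alpha> f = restrict (\<lambda>a. f (span B k \<alpha> {a})) (bul B)"

text \<open>Elements of \<open>\<nat>[B\<^sup>\<bullet>]\<close> (with the zero of \<open>B\<^sup>\<bullet>\<close> identified with 0) are
  multisets over \<open>B\<^sup>\<bullet> - {0}\<close>.\<close>
definition memb :: "('b, 'm) obp_scheme \<Rightarrow> 'b \<Rightarrow> 'b multiset" where
  "memb B a = (if a = zer B then {#} else {#a#})"

definition mmul :: "('b, 'm) obp_scheme \<Rightarrow> 'b multiset \<Rightarrow> 'b multiset \<Rightarrow> 'b multiset" where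
  "mmul B X Y = filter_mset (\<lambda>c. c \<noteq> zer B)
      (sum_mset (image_mset (\<lambda>x. image_mset (mul B x) Y) X))"

text \<open>The order on \<open>(B\<^sup>mon_{k\<le>1})\<^sup>+\<close>: the smallest preorder on \<open>\<nat>[B\<^sup>\<bullet>]\<close> compatible
  with addition and multiplication containing the relations \<open>a \<le> \<Sum> b_j\<close> of \<open>B\<^sup>+\<close>
  and \<open>a\<close>-bar \<open>\<le> 1\<close> for \<open>a \<in> k\<^sup>\<bullet>\<close>.\<close>
inductive mon_le :: "('b, 'm) obp_scheme \<Rightarrow> ('k, 'n) obp_scheme \<Rightarrow> ('k \<Rightarrow> 'b)
                     \<Rightarrow> 'b multiset \<Rightarrow> 'b multiset \<Rightarrow> bool"
  for B k \<alpha> where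
  gen: "a \<in> bul B \<Longrightarrow> set bs \<subseteq> bul B \<Longrightarrow> le B a (sumlist B bs) \<Longrightarrow>
          mon_le B k \<alpha> (memb B a) (sum_list (map (memb B) bs))"
| kle: "c \<in> bul k \<Longrightarrow> mon_le B k \<alpha> (memb B (\<alpha> c)) (memb B (one B))"
| refl: "set_mset X \<subseteq> bul B - {zer B} \<Longrightarrow> mon_le B k \<alpha> X X"
| trans: "mon_le B k \<alpha> X Y \<Longrightarrow> mon_le B k \<alpha> Y Z \<Longrightarrow> mon_le B k \<alpha> X Z"
| addc: "mon_le B k \<alpha> X Y \<Longrightarrow> set_mset Z \<subseteq> bul B - {zer B} \<Longrightarrow>
          mon_le B k \<alpha> (X + Z) (Y + Z)"
| mulc: "mon_le B k \<alpha> X Y \<Longrightarrow> set_mset Z \<subseteq> bul B - {zer B} \<Longrightarrow>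
          mon_le B k \<alpha> (mmul B X Z) (mmul B Y Z)"

text \<open>Elements of \<open>\<bool>[C\<^sup>\<bullet>]\<close> (zero identified with 0) are finite subsets of
  \<open>C\<^sup>\<bullet> - {0}\<close>, with union as addition.\<close>
definition bfin :: "('b, 'm) obp_scheme \<Rightarrow> 'b set set" where
  "bfin B = {X. finite X \<and> X \<subseteq> bul B - {zer B}}"

definition semb :: "('b, 'm) obp_scheme \<Rightarrow> 'b \<Rightarrow> 'b set" where
  "semb B a = (if a = zer B then {} else {a})"

definition smul :: "('b, 'm) obp_scheme \<Rightarrow> 'b set \<Rightarrow> 'b set \<Rightarrow> 'b set" where
  "smul B X Y = {mul B x y | x y. x \<in> X \<and> y \<in> Y} - {zer B}"

text \<open>The congruence on \<open>\<bool>[C\<^sup>\<bullet>]\<close>, \<open>C = B\<^sup>mon_{k\<le>1}\<close>, generated by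
  \<open>a + \<Sum> b_j = \<Sum> b_j\<close> for all relations \<open>a \<le> \<Sum> b_j\<close> in \<open>C\<^sup>+\<close>.\<close>
inductive bend_cong :: "('b, 'm) obp_scheme \<Rightarrow> ('k, 'n) obp_scheme \<Rightarrow> ('k \<Rightarrow> 'b)
                        \<Rightarrow> 'b set \<Rightarrow> 'b set \<Rightarrow> bool"
  for B k \<alpha> where
  gen: "a \<in> bul B \<Longrightarrow> set_mset bs \<subseteq> bul B - {zer B} \<Longrightarrow> mon_le B k \<alpha> (memb B a) bs \<Longrightarrow>
          bend_cong B k \<alpha> (semb B a \<union> set_mset bs) (set_mset bs)"
| refl: "X \<in> bfin B \<Longrightarrow> bend_cong B k \<alpha> X X"
| sym: "bend_cong B k \<alpha> X Y \<Longrightarrow> bend_cong B k \<alpha> Y X"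
| trans: "bend_cong B k \<alpha> X Y \<Longrightarrow> bend_cong B k \<alpha> Y Z \<Longrightarrow> bend_cong B k \<alpha> X Z"
| addc: "bend_cong B k \<alpha> X Y \<Longrightarrow> Z \<in> bfin B \<Longrightarrow> bend_cong B k \<alpha> (X \<union> Z) (Y \<union> Z)"
| mulc: "bend_cong B k \<alpha> X Y \<Longrightarrow> Z \<in> bfin B \<Longrightarrow> bend_cong B k \<alpha> (smul B X Z) (smul B Y Z)"

definition bend_rel :: "('b, 'm) obp_scheme \<Rightarrow> ('k, 'n) obp_scheme \<Rightarrow> ('k \<Rightarrow> 'b) \<Rightarrow> ('b set \<times> 'b set) set" where
  "bend_rel B k \<alpha> = {(X, Y). bend_cong B k \<alpha> X Y}"

definition Bend_srng :: "('b, 'm) obp_scheme \<Rightarrow> ('k, 'n) obp_scheme \<Rightarrow> ('k \<Rightarrow> 'b) \<Rightarrow> 'b set set srng" where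
  "Bend_srng B k \<alpha> = \<lparr>
      car = bfin B // bend_rel B k \<alpha>,
      add = (\<lambda>P Q. \<Union>X\<in>P. \<Union>Y\<in>Q. bend_rel B k \<alpha> `` {X \<union> Y}),
      mul = (\<lambda>P Q. \<Union>X\<in>P. \<Union>Y\<in>Q. bend_rel B k \<alpha> `` {smul B X Y}),
      zer = bend_rel B k \<alpha> `` {{}},
      one = bend_rel B k \<alpha> `` {semb B (one B)} \<rparr>"

end

theory Submission
  imports Defs
begin

lemma sumlist_Nil[simp]: "sumlist (R::('a,'m) srng_scheme) [] = zer R" by (simp add: sumlist_def)
lemma sumlist_Cons[simp]: "sumlist R (x#xs) = add R x (sumlist R xs)" by (simp add: sumlist_def)

context
  fixes R :: "('a,'m) srng_scheme"
  assumes cs: "comm_srng R"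
begin
lemma cs_zer[simp]: "zer R \<in> car R" using cs unfolding comm_srng_def by blast
lemma cs_one[simp]: "one R \<in> car R" using cs unfolding comm_srng_def by blast
lemma cs_add[simp]: "x \<in> car R \<Longrightarrow> y \<in> car R \<Longrightarrow> add R x y \<in> car R"
  using cs unfolding comm_srng_def by blast
lemma cs_mul[simp]: "x \<in> car R \<Longrightarrow> y \<in> car R \<Longrightarrow> mul R x y \<in> car R"
  using cs unfolding comm_srng_def by blast
lemma cs_add_assoc: "x \<in> car R \<Longrightarrow> y \<in> car R \<Longrightarrow> z \<in> car R \<Longrightarrow> add R (add R x y) z = add R x (add R y z)"
  using cs unfolding comm_srng_def by blast
lemma cs_mul_assoc: "x \<in> car R \<Longrightarrow> y \<in> car R \<Longrightarrow> z \<in> car R \<Longrightarrow> mul R (mul R x y) z = mul R x (mul R y z)"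
  using cs unfolding comm_srng_def by blast
lemma cs_distr: "x \<in> car R \<Longrightarrow> y \<in> car R \<Longrightarrow> z \<in> car R \<Longrightarrow> mul R x (add R y z) = add R (mul R x y) (mul R x z)"
  using cs unfolding comm_srng_def by blast
lemma cs_add_comm: "x \<in> car R \<Longrightarrow> y \<in> car R \<Longrightarrow> add R x y = add R y x"
  using cs unfolding comm_srng_def by blast
lemma cs_mul_comm: "x \<in> car R \<Longrightarrow> y \<in> car R \<Longrightarrow> mul R x y = mul R y x"
  using cs unfolding comm_srng_def by blast
lemma cs_add0[simp]: "x \<in> car R \<Longrightarrow> add R (zer R) x = x"
  using cs unfolding comm_srng_def by blast
lemma cs_mul1[simp]: "x \<in> car R \<Longrightarrow> mul R (one R) x = x"
  using cs unfolding comm_srng_def by blast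
lemma cs_mul0[simp]: "x \<in> car R \<Longrightarrow> mul R (zer R) x = zer R"
  using cs unfolding comm_srng_def by blast
lemma cs_add0r[simp]: "x \<in> car R \<Longrightarrow> add R x (zer R) = x"
  using cs_add_comm[of x "zer R"] by simp
lemma cs_mul1r[simp]: "x \<in> car R \<Longrightarrow> mul R x (one R) = x"
  using cs_mul_comm[of x "one R"] by simp
lemma cs_mul0r[simp]: "x \<in> car R \<Longrightarrow> mul R x (zer R) = zer R"
  using cs_mul_comm[of x "zer R"] by simp
lemma cs_distr_r: "x \<in> car R \<Longrightarrow> y \<in> car R \<Longrightarrow> z \<in> car R \<Longrightarrow> mul R (add R x y) z = add R (mul R x z) (mul R y z)"
  using cs_distr[of z x y] cs_mul_comm by simp
lemma cs_add_lc: "x \<in> car R \<Longrightarrow> y \<in> car R \<Longrightarrow> z \<in> car R \<Longrightarrow> add R x (add R y z) = add R y (add R x z)"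
  by (metis cs_add_assoc cs_add_comm)

lemma sumlist_car[simp]: "set xs \<subseteq> car R \<Longrightarrow> sumlist R xs \<in> car R"
  by (induction xs) auto
lemma sumlist_append: "set xs \<subseteq> car R \<Longrightarrow> set ys \<subseteq> car R \<Longrightarrow>
   sumlist R (xs @ ys) = add R (sumlist R xs) (sumlist R ys)"
  by (induction xs) (auto simp: cs_add_assoc)
lemma sumlist_mul: "z \<in> car R \<Longrightarrow> set xs \<subseteq> car R \<Longrightarrow>
   mul R z (sumlist R xs) = sumlist R (map (mul R z) xs)"
  by (induction xs) (auto simp: cs_distr)
lemma sumlist_mul_r: "z \<in> car R \<Longrightarrow> set xs \<subseteq> car R \<Longrightarrow>
   mul R (sumlist R xs) z = sumlist R (map (\<lambda>x. mul R x z) xs)"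
proof -
  assume a: "z \<in> car R" "set xs \<subseteq> car R"
  have "mul R (sumlist R xs) z = mul R z (sumlist R xs)" using a by (simp add: cs_mul_comm)
  also have "\<dots> = sumlist R (map (mul R z) xs)" using a by (simp add: sumlist_mul)
  also have "map (mul R z) xs = map (\<lambda>x. mul R x z) xs" using a
    by (intro map_cong) (auto simp: cs_mul_comm)
  finally show ?thesis .
qed
lemma sumlist_double: "set xs \<subseteq> car R \<Longrightarrow> set ys \<subseteq> car R \<Longrightarrow>
   sumlist R (concat (map (\<lambda>x. map (mul R x) ys) xs)) = mul R (sumlist R xs) (sumlist R ys)"
proof (induction xs)
  case Nil thus ?case by simp
next
  case (Cons x xs)
  have s: "set (concat (map (\<lambda>x. map (mul R x) ys) xs)) \<subseteq> car R" using Cons.prems by (fastforce intro: cs_mul)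
  have m: "set (map (mul R x) ys) \<subseteq> car R" using Cons.prems by auto
  have "sumlist R (concat (map (\<lambda>x. map (mul R x) ys) (x#xs)))
     = add R (sumlist R (map (mul R x) ys)) (sumlist R (concat (map (\<lambda>x. map (mul R x) ys) xs)))"
    using sumlist_append[OF m s] by simp
  also have "\<dots> = add R (mul R x (sumlist R ys)) (mul R (sumlist R xs) (sumlist R ys))"
    using Cons by (simp add: sumlist_mul)
  also have "\<dots> = mul R (sumlist R (x#xs)) (sumlist R ys)"
    using Cons.prems by (simp add: cs_distr_r)
  finally show ?case .
qed
end



locale ctx =
  fixes B :: "'b obp" and k :: "'k obp" and \<alpha> :: "'k \<Rightarrow> 'b"
  assumes k_ob: "ordered_blueprint k" and B_ob: "ordered_blueprint B" and hom: "obp_hom k B \<alpha>"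
begin

lemma csB: "comm_srng B" using B_ob[unfolded ordered_blueprint_def] by (elim conjE) assumption
lemma csk: "comm_srng k" using k_ob[unfolded ordered_blueprint_def] by (elim conjE) assumption
lemma bul_car: "bul B \<subseteq> car B" using B_ob[unfolded ordered_blueprint_def] by (elim conjE) assumption
lemma bulk_car: "bul k \<subseteq> car k" using k_ob[unfolded ordered_blueprint_def] by (elim conjE) assumption
lemma bul_carI[simp]: "x \<in> bul B \<Longrightarrow> x \<in> car B" using bul_car by auto
lemma bul_carsI[simp]: "X \<subseteq> bul B \<Longrightarrow> X \<subseteq> car B" using bul_car by auto
lemma ob_le_refl: "\<forall>x\<in>car B. le B x x"
  using B_ob[unfolded ordered_blueprint_def] by (elim conjE) assumption
lemma ob_le_car: "\<forall>x y. le B x y \<longrightarrow> x \<in> car B \<and> y \<in> car B"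
  using B_ob[unfolded ordered_blueprint_def] by (elim conjE) assumption
lemma ob_le_trans: "\<forall>x\<in>car B. \<forall>y\<in>car B. \<forall>z\<in>car B. le B x y \<and> le B y z \<longrightarrow> le B x z"
  using B_ob[unfolded ordered_blueprint_def] by (elim conjE) assumption
lemma ob_le_comp: "\<forall>x\<in>car B. \<forall>y\<in>car B. \<forall>z\<in>car B. le B x y \<longrightarrow>
        le B (add B x z) (add B y z) \<and> le B (mul B x z) (mul B y z)"
  using B_ob[unfolded ordered_blueprint_def] by (elim conjE) assumption
lemma le_car: "le B x y \<Longrightarrow> x \<in> car B \<and> y \<in> car B"
  using ob_le_car by blast
lemma le_refl: "x \<in> car B \<Longrightarrow> le B x x"
  using ob_le_refl by blast
lemma le_trans: "le B x y \<Longrightarrow> le B y z \<Longrightarrow> le B x z"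
proof -
  assume a: "le B x y" "le B y z"
  then have "x \<in> car B" "y \<in> car B" "z \<in> car B" using le_car by blast+
  thus ?thesis using ob_le_trans a by blast
qed
lemma le_addr: "le B x y \<Longrightarrow> z \<in> car B \<Longrightarrow> le B (add B x z) (add B y z)"
proof -
  assume a: "le B x y" "z \<in> car B"
  then have "x \<in> car B" "y \<in> car B" using le_car by blast+
  thus ?thesis using ob_le_comp a by blast
qed
lemma le_mulr: "le B x y \<Longrightarrow> z \<in> car B \<Longrightarrow> le B (mul B x z) (mul B y z)"
proof -
  assume a: "le B x y" "z \<in> car B"
  then have "x \<in> car B" "y \<in> car B" using le_car by blast+
  thus ?thesis using ob_le_comp a by blast
qed
lemma le_mull: "le B x y \<Longrightarrow> z \<in> car B \<Longrightarrow> le B (mul B z x) (mul B z y)"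
proof -
  assume a: "le B x y" "z \<in> car B"
  then have "x \<in> car B" "y \<in> car B" using le_car by blast+
  thus ?thesis using le_mulr[OF a] a cs_mul_comm[OF csB] by simp
qed
lemma le_add2: "le B a b \<Longrightarrow> le B c d \<Longrightarrow> le B (add B a c) (add B b d)"
proof -
  assume 1: "le B a b" and 2: "le B c d"
  have "le B (add B a c) (add B b c)" using le_addr 1 2 le_car by blast
  moreover have "le B (add B c b) (add B d b)" using le_addr 1 2 le_car by blast
  moreover have "add B c b = add B b c" "add B d b = add B b d"
    using le_car 1 2 cs_add_comm[OF csB] by blast+
  ultimately show ?thesis using le_trans by metis
qed
lemma zer_bul[simp]: "zer B \<in> bul B"
  using B_ob[unfolded ordered_blueprint_def] by (elim conjE) assumption
lemma one_bul[simp]: "one B \<in> bul B"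
  using B_ob[unfolded ordered_blueprint_def] by (elim conjE) assumption
lemma ob_mul: "\<forall>x\<in>bul B. \<forall>y\<in>bul B. mul B x y \<in> bul B"
  using B_ob[unfolded ordered_blueprint_def] by (elim conjE) assumption
lemma mul_bul[simp]: "x \<in> bul B \<Longrightarrow> y \<in> bul B \<Longrightarrow> mul B x y \<in> bul B"
  using ob_mul by blast
lemma obk_mul: "\<forall>x\<in>bul k. \<forall>y\<in>bul k. mul k x y \<in> bul k"
  using k_ob[unfolded ordered_blueprint_def] by (elim conjE) assumption
lemma mulk_bul: "x \<in> bul k \<Longrightarrow> y \<in> bul k \<Longrightarrow> mul k x y \<in> bul k"
  using obk_mul by blast
lemma onek_bul: "one k \<in> bul k"
  using k_ob[unfolded ordered_blueprint_def] by (elim conjE) assumption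
lemma hom_bul: "\<alpha> ` bul k \<subseteq> bul B"
  using hom[unfolded obp_hom_def] by (elim conjE) assumption
lemma alpha_bul[simp]: "c \<in> bul k \<Longrightarrow> \<alpha> c \<in> bul B"
  using hom_bul by blast
lemma hom_s: "srng_hom k B \<alpha>"
  using hom[unfolded obp_hom_def] by (elim conjE) assumption
lemma hom_mul: "\<forall>x\<in>car k. \<forall>y\<in>car k. \<alpha> (add k x y) = add B (\<alpha> x) (\<alpha> y) \<and> \<alpha> (mul k x y) = mul B (\<alpha> x) (\<alpha> y)"
  using hom_s[unfolded srng_hom_def] by (elim conjE) assumption
lemma alpha_mul: "c \<in> bul k \<Longrightarrow> d \<in> bul k \<Longrightarrow> \<alpha> (mul k c d) = mul B (\<alpha> c) (\<alpha> d)"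
  using hom_mul bulk_car by blast
lemma alpha_one: "\<alpha> (one k) = one B"
  using hom_s[unfolded srng_hom_def] by (elim conjE) assumption

lemmas B_simps = cs_zer[OF csB] cs_one[OF csB] cs_add[OF csB] cs_mul[OF csB]
  cs_add0[OF csB] cs_add0r[OF csB] cs_mul1[OF csB] cs_mul1r[OF csB] cs_mul0[OF csB] cs_mul0r[OF csB]
  sumlist_car[OF csB]
declare B_simps[simp]

lemma kspan_bul: "kspan B k \<alpha> (bul B)"
  unfolding kspan_def by auto

lemma kspan_down: "kspan B k \<alpha> M \<Longrightarrow> b \<in> bul B \<Longrightarrow> set as \<subseteq> M \<Longrightarrow> le B b (sumlist B as) \<Longrightarrow> b \<in> M"
  unfolding kspan_def by blast
lemma kspan_alpha: "kspan B k \<alpha> M \<Longrightarrow> c \<in> bul k \<Longrightarrow> m \<in> M \<Longrightarrow> mul B (\<alpha> c) m \<in> M"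
  unfolding kspan_def by blast
lemma kspan_subbul: "kspan B k \<alpha> M \<Longrightarrow> M \<subseteq> bul B"
  unfolding kspan_def by blast
lemma kspan_Inter: "F \<noteq> {} \<Longrightarrow> \<forall>M\<in>F. kspan B k \<alpha> M \<Longrightarrow> kspan B k \<alpha> (\<Inter>F)"
proof -
  assume ne: "F \<noteq> {}" and all: "\<forall>M\<in>F. kspan B k \<alpha> M"
  show ?thesis unfolding kspan_def
  proof (intro conjI ballI allI impI)
    obtain M0 where "M0 \<in> F" using ne by blast
    hence "M0 \<subseteq> bul B" using all kspan_subbul by blast
    thus "\<Inter>F \<subseteq> bul B" using \<open>M0 \<in> F\<close> by blast
  next
    fix a m assume a: "a \<in> bul k" and m: "m \<in> \<Inter>F"
    show "mul B (\<alpha> a) m \<in> \<Inter>F"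
    proof
      fix M assume "M \<in> F"
      hence "kspan B k \<alpha> M" "m \<in> M" using all m by blast+
      thus "mul B (\<alpha> a) m \<in> M" using a kspan_alpha by blast
    qed
  next
    fix b as assume b: "b \<in> bul B" and h: "set as \<subseteq> \<Inter>F \<and> le B b (sumlist B as)"
    show "b \<in> \<Inter>F"
    proof
      fix M assume "M \<in> F"
      hence "kspan B k \<alpha> M" "set as \<subseteq> M" using all h by blast+
      thus "b \<in> M" using b h kspan_down by blast
    qed
  qed
qed

lemma kspan_span: "A \<subseteq> bul B \<Longrightarrow> kspan B k \<alpha> (span B k \<alpha> A)"
proof -
  assume A: "A \<subseteq> bul B"
  have "bul B \<in> {M. kspan B k \<alpha> M \<and> A \<subseteq> M}" using A kspan_bul by blast
  hence "{M. kspan B k \<alpha> M \<and> A \<subseteq> M} \<noteq> {}" by blast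
  thus ?thesis unfolding span_def by (rule kspan_Inter) blast
qed

lemma span_sub: "A \<subseteq> bul B \<Longrightarrow> A \<subseteq> span B k \<alpha> A"
  unfolding span_def by auto
lemma span_least: "kspan B k \<alpha> M \<Longrightarrow> A \<subseteq> M \<Longrightarrow> span B k \<alpha> A \<subseteq> M"
  unfolding span_def by auto
lemma span_bul: "A \<subseteq> bul B \<Longrightarrow> span B k \<alpha> A \<subseteq> bul B"
  using span_least kspan_bul by blast
lemma kspan_zer: "kspan B k \<alpha> M \<Longrightarrow> zer B \<in> M"
proof -
  assume "kspan B k \<alpha> M"
  moreover have "le B (zer B) (sumlist B [])" using le_refl by simp
  ultimately show ?thesis using kspan_down[of M "zer B" "[]"] by simp
qed
lemma span_zer: "A \<subseteq> bul B \<Longrightarrow> zer B \<in> span B k \<alpha> A"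
  using kspan_zer kspan_span by blast
lemma span_down: "A \<subseteq> bul B \<Longrightarrow> b \<in> bul B \<Longrightarrow> set as \<subseteq> span B k \<alpha> A \<Longrightarrow> le B b (sumlist B as) \<Longrightarrow> b \<in> span B k \<alpha> A"
  using kspan_down kspan_span by blast
lemma span_alpha: "A \<subseteq> bul B \<Longrightarrow> c \<in> bul k \<Longrightarrow> m \<in> span B k \<alpha> A \<Longrightarrow> mul B (\<alpha> c) m \<in> span B k \<alpha> A"
  using kspan_alpha kspan_span by blast
lemma span_subI: "A \<subseteq> bul B \<Longrightarrow> A' \<subseteq> bul B \<Longrightarrow> A \<subseteq> span B k \<alpha> A' \<Longrightarrow> span B k \<alpha> A \<subseteq> span B k \<alpha> A'"
  using span_least kspan_span by blast
lemma span_mono: "A \<subseteq> A' \<Longrightarrow> A' \<subseteq> bul B \<Longrightarrow> span B k \<alpha> A \<subseteq> span B k \<alpha> A'"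
proof -
  assume a: "A \<subseteq> A'" "A' \<subseteq> bul B"
  have "A' \<subseteq> span B k \<alpha> A'" using span_sub[OF a(2)] .
  hence "A \<subseteq> span B k \<alpha> A'" using a(1) by (rule subset_trans[rotated])
  thus ?thesis using span_subI[of A A'] a by (meson subset_trans)
qed
lemma span_minus0: "A \<subseteq> bul B \<Longrightarrow> span B k \<alpha> (A - {zer B}) = span B k \<alpha> A"
proof
  assume a: "A \<subseteq> bul B"
  have a': "A - {zer B} \<subseteq> bul B" using a by blast
  show "span B k \<alpha> (A - {zer B}) \<subseteq> span B k \<alpha> A" using span_mono[OF _ a] by blast
  have "A - {zer B} \<subseteq> span B k \<alpha> (A - {zer B})" using span_sub[OF a'] .
  moreover have "zer B \<in> span B k \<alpha> (A - {zer B})" using span_zer[OF a'] .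
  ultimately have "A \<subseteq> span B k \<alpha> (A - {zer B})" by blast
  thus "span B k \<alpha> A \<subseteq> span B k \<alpha> (A - {zer B})" using span_subI[OF a a'] by blast
qed
lemma span_eqI: "A \<subseteq> bul B \<Longrightarrow> A' \<subseteq> bul B \<Longrightarrow> A \<subseteq> span B k \<alpha> A' \<Longrightarrow> A' \<subseteq> span B k \<alpha> A
   \<Longrightarrow> span B k \<alpha> A = span B k \<alpha> A'"
  using span_subI[of A A'] span_subI[of A' A] by (intro equalityI) simp_all

lemma span_mul_pre:
  assumes Y: "Y \<subseteq> bul B" and Q: "Q \<subseteq> bul B" and z: "z \<in> bul B"
    and yz: "\<forall>y\<in>Y. mul B y z \<in> span B k \<alpha> Q" and x: "x \<in> span B k \<alpha> Y"
  shows "mul B x z \<in> span B k \<alpha> Q"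
proof -
  let ?M = "{x \<in> bul B. mul B x z \<in> span B k \<alpha> Q}"
  have "kspan B k \<alpha> ?M"
    unfolding kspan_def
  proof (intro conjI ballI allI impI)
    show "?M \<subseteq> bul B" by blast
  next
    fix a m assume a: "a \<in> bul k" and m: "m \<in> ?M"
    have "mul B (mul B (\<alpha> a) m) z = mul B (\<alpha> a) (mul B m z)"
      using a m z by (simp add: cs_mul_assoc[OF csB])
    thus "mul B (\<alpha> a) m \<in> ?M" using a m z span_alpha[OF Q a] by auto
  next
    fix b as assume b: "b \<in> bul B" and h: "set as \<subseteq> ?M \<and> le B b (sumlist B as)"
    have asc: "set as \<subseteq> car B" using h bul_car by blast
    have "le B (mul B b z) (mul B (sumlist B as) z)" using le_mulr h z by auto
    also have "mul B (sumlist B as) z = sumlist B (map (\<lambda>x. mul B x z) as)"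
      using sumlist_mul_r[OF csB _ asc] z by simp
    finally have "le B (mul B b z) (sumlist B (map (\<lambda>x. mul B x z) as))" .
    moreover have "set (map (\<lambda>x. mul B x z) as) \<subseteq> span B k \<alpha> Q" using h by auto
    moreover have "mul B b z \<in> bul B" using b z by simp
    ultimately show "b \<in> ?M" using span_down[OF Q] b z by blast
  qed
  moreover have "Y \<subseteq> ?M" using Y yz by blast
  ultimately show ?thesis using span_least x by blast
qed

end


lemma cs_add4: "comm_srng R \<Longrightarrow> a \<in> car R \<Longrightarrow> b \<in> car R \<Longrightarrow> c \<in> car R \<Longrightarrow> d \<in> car R \<Longrightarrow>
  add R (add R a b) (add R c d) = add R (add R a c) (add R b d)"
  by (simp add: cs_add_assoc cs_add_lc)

context ctx begin

lemma kspanI: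
  assumes "M \<subseteq> bul B"
    and "\<And>a m. a \<in> bul k \<Longrightarrow> m \<in> M \<Longrightarrow> mul B (\<alpha> a) m \<in> M"
    and "\<And>b as. b \<in> bul B \<Longrightarrow> set as \<subseteq> M \<Longrightarrow> le B b (sumlist B as) \<Longrightarrow> b \<in> M"
  shows "kspan B k \<alpha> M"
  unfolding kspan_def using assms by blast

lemma span_car: "X \<subseteq> bul B \<Longrightarrow> set xs \<subseteq> span B k \<alpha> X \<Longrightarrow> set xs \<subseteq> car B"
  using span_bul bul_car by blast

lemma An_addI: "m \<in> bul B \<Longrightarrow> set xs \<subseteq> M1 \<Longrightarrow> set ys \<subseteq> M2 \<Longrightarrow>
   le B m (add B (sumlist B xs) (sumlist B ys)) \<Longrightarrow> m \<in> An_add B M1 M2"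
  unfolding An_add_def by blast

lemma An_addE: "m \<in> An_add B M1 M2 \<Longrightarrow> (\<And>xs ys. m \<in> bul B \<Longrightarrow> set xs \<subseteq> M1 \<Longrightarrow> set ys \<subseteq> M2 \<Longrightarrow>
   le B m (add B (sumlist B xs) (sumlist B ys)) \<Longrightarrow> P) \<Longrightarrow> P"
  unfolding An_add_def by blast

lemma An_add_span:
  assumes X: "X \<subseteq> bul B" and Y: "Y \<subseteq> bul B"
  shows "An_add B (span B k \<alpha> X) (span B k \<alpha> Y) = span B k \<alpha> (X \<union> Y)"
proof
  have XY: "X \<union> Y \<subseteq> bul B" using X Y by blast
  have sX: "span B k \<alpha> X \<subseteq> span B k \<alpha> (X \<union> Y)" using span_mono[OF _ XY] by blast
  have sY: "span B k \<alpha> Y \<subseteq> span B k \<alpha> (X \<union> Y)" using span_mono[OF _ XY] by blast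
  show "An_add B (span B k \<alpha> X) (span B k \<alpha> Y) \<subseteq> span B k \<alpha> (X \<union> Y)"
  proof
    fix m assume "m \<in> An_add B (span B k \<alpha> X) (span B k \<alpha> Y)"
    then obtain xs ys where m: "m \<in> bul B" "set xs \<subseteq> span B k \<alpha> X" "set ys \<subseteq> span B k \<alpha> Y"
      "le B m (add B (sumlist B xs) (sumlist B ys))" by (rule An_addE)
    have cx: "set xs \<subseteq> car B" using span_car[OF X m(2)] .
    have cy: "set ys \<subseteq> car B" using span_car[OF Y m(3)] .
    have "le B m (sumlist B (xs @ ys))" using m(4) sumlist_append[OF csB cx cy] by simp
    moreover have "set (xs @ ys) \<subseteq> span B k \<alpha> (X \<union> Y)" using m(2,3) sX sY by auto
    ultimately show "m \<in> span B k \<alpha> (X \<union> Y)" using span_down[OF XY m(1)] by blast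
  qed
next
  let ?T = "An_add B (span B k \<alpha> X) (span B k \<alpha> Y)"
  have lists: "set ms \<subseteq> ?T \<Longrightarrow> \<exists>xs ys. set xs \<subseteq> span B k \<alpha> X \<and> set ys \<subseteq> span B k \<alpha> Y \<and>
      le B (sumlist B ms) (add B (sumlist B xs) (sumlist B ys))" for ms
  proof (induction ms)
    case Nil
    have "le B (sumlist B []) (add B (sumlist B []) (sumlist B []))" using le_refl by simp
    thus ?case by (metis empty_set empty_subsetI)
  next
    case (Cons m ms)
    then obtain xs2 ys2 where h2: "set xs2 \<subseteq> span B k \<alpha> X" "set ys2 \<subseteq> span B k \<alpha> Y"
      "le B (sumlist B ms) (add B (sumlist B xs2) (sumlist B ys2))" by auto
    have "m \<in> ?T" using Cons.prems by simp
    then obtain xs1 ys1 where h1: "set xs1 \<subseteq> span B k \<alpha> X" "set ys1 \<subseteq> span B k \<alpha> Y"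
      "le B m (add B (sumlist B xs1) (sumlist B ys1))" by (rule An_addE)
    have c: "set xs1 \<subseteq> car B" "set xs2 \<subseteq> car B" "set ys1 \<subseteq> car B" "set ys2 \<subseteq> car B"
      using span_car[OF X h1(1)] span_car[OF X h2(1)] span_car[OF Y h1(2)] span_car[OF Y h2(2)] .
    have "le B (sumlist B (m # ms)) (add B (add B (sumlist B xs1) (sumlist B ys1)) (add B (sumlist B xs2) (sumlist B ys2)))"
      using le_add2[OF h1(3) h2(3)] by simp
    also have "add B (add B (sumlist B xs1) (sumlist B ys1)) (add B (sumlist B xs2) (sumlist B ys2))
        = add B (sumlist B (xs1 @ xs2)) (sumlist B (ys1 @ ys2))"
      using c by (simp add: sumlist_append[OF csB] cs_add4[OF csB])
    finally have "le B (sumlist B (m # ms)) (add B (sumlist B (xs1 @ xs2)) (sumlist B (ys1 @ ys2)))" .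
    moreover have "set (xs1 @ xs2) \<subseteq> span B k \<alpha> X" "set (ys1 @ ys2) \<subseteq> span B k \<alpha> Y"
      using h1 h2 by auto
    ultimately show ?case by blast
  qed
  have ks: "kspan B k \<alpha> ?T"
  proof (rule kspanI)
    show "?T \<subseteq> bul B" unfolding An_add_def by blast
  next
    fix a m assume a: "a \<in> bul k" and m: "m \<in> ?T"
    then obtain xs ys where h: "m \<in> bul B" "set xs \<subseteq> span B k \<alpha> X" "set ys \<subseteq> span B k \<alpha> Y"
      "le B m (add B (sumlist B xs) (sumlist B ys))" by (metis An_addE)
    have c: "set xs \<subseteq> car B" "set ys \<subseteq> car B" using span_car[OF X h(2)] span_car[OF Y h(3)] .
    have ac: "\<alpha> a \<in> car B" using a by simp
    have "le B (mul B (\<alpha> a) m) (mul B (\<alpha> a) (add B (sumlist B xs) (sumlist B ys)))"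
      using le_mull[OF h(4) ac] .
    also have "mul B (\<alpha> a) (add B (sumlist B xs) (sumlist B ys))
       = add B (sumlist B (map (mul B (\<alpha> a)) xs)) (sumlist B (map (mul B (\<alpha> a)) ys))"
      using c ac by (simp add: cs_distr[OF csB] sumlist_mul[OF csB])
    finally have l: "le B (mul B (\<alpha> a) m) (add B (sumlist B (map (mul B (\<alpha> a)) xs)) (sumlist B (map (mul B (\<alpha> a)) ys)))" .
    have "set (map (mul B (\<alpha> a)) xs) \<subseteq> span B k \<alpha> X" using h(2) span_alpha[OF X a] by auto
    moreover have "set (map (mul B (\<alpha> a)) ys) \<subseteq> span B k \<alpha> Y" using h(3) span_alpha[OF Y a] by auto
    moreover have "mul B (\<alpha> a) m \<in> bul B" using a h(1) by simp
    ultimately show "mul B (\<alpha> a) m \<in> ?T" using l by (intro An_addI)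
  next
    fix b as assume b: "b \<in> bul B" and as: "set as \<subseteq> ?T" and l: "le B b (sumlist B as)"
    obtain xs ys where h: "set xs \<subseteq> span B k \<alpha> X" "set ys \<subseteq> span B k \<alpha> Y"
      "le B (sumlist B as) (add B (sumlist B xs) (sumlist B ys))" using lists[OF as] by blast
    show "b \<in> ?T" using le_trans[OF l h(3)] h(1,2) b by (intro An_addI)
  qed
  have "X \<union> Y \<subseteq> ?T"
  proof
    fix x assume x: "x \<in> X \<union> Y"
    hence xb: "x \<in> bul B" using X Y by blast
    have lx: "le B x x" using xb le_refl by simp
    show "x \<in> ?T"
    proof (cases "x \<in> X")
      case True
      hence "set [x] \<subseteq> span B k \<alpha> X" using span_sub[OF X] by auto
      moreover have "le B x (add B (sumlist B [x]) (sumlist B []))" using lx xb by simp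
      ultimately show ?thesis using xb An_addI[where xs="[x]" and ys="[]"] by simp
    next
      case False
      hence "set [x] \<subseteq> span B k \<alpha> Y" using x span_sub[OF Y] by auto
      moreover have "le B x (add B (sumlist B []) (sumlist B [x]))" using lx xb by simp
      ultimately show ?thesis using xb An_addI[where xs="[]" and ys="[x]"] by simp
    qed
  qed
  thus "span B k \<alpha> (X \<union> Y) \<subseteq> ?T" using span_least[OF ks] by blast
qed


lemma smul_bul: "X \<subseteq> bul B \<Longrightarrow> Y \<subseteq> bul B \<Longrightarrow> smul B X Y \<subseteq> bul B"
  unfolding smul_def by (auto simp: subset_iff)

lemma smul_mem: "x \<in> X \<Longrightarrow> y \<in> Y \<Longrightarrow> mul B x y \<noteq> zer B \<Longrightarrow> mul B x y \<in> smul B X Y"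
  unfolding smul_def by blast

lemma smul_memE: "w \<in> smul B X Y \<Longrightarrow> (\<And>x y. x \<in> X \<Longrightarrow> y \<in> Y \<Longrightarrow> w = mul B x y \<Longrightarrow> w \<noteq> zer B \<Longrightarrow> P) \<Longrightarrow> P"
  unfolding smul_def by blast

lemma smul_finite: "finite X \<Longrightarrow> finite Y \<Longrightarrow> finite (smul B X Y)"
proof -
  assume "finite X" "finite Y"
  moreover have "smul B X Y \<subseteq> (\<lambda>(x, y). mul B x y) ` (X \<times> Y)" unfolding smul_def by auto
  ultimately show ?thesis by (meson finite_SigmaI finite_imageI finite_subset)
qed

lemma span_prod:
  assumes X: "X \<subseteq> bul B" and Y: "Y \<subseteq> bul B" and x: "x \<in> span B k \<alpha> X" and y: "y \<in> span B k \<alpha> Y"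
  shows "mul B x y \<in> span B k \<alpha> (smul B X Y)"
proof -
  let ?Q = "smul B X Y"
  have Q: "?Q \<subseteq> bul B" using smul_bul[OF X Y] .
  have base: "mul B x0 y0 \<in> span B k \<alpha> ?Q" if "x0 \<in> X" "y0 \<in> Y" for x0 y0
  proof (cases "mul B x0 y0 = zer B")
    case True thus ?thesis using span_zer[OF Q] by simp
  next
    case False thus ?thesis using smul_mem[OF that False] span_sub[OF Q] by blast
  qed
  have step1: "mul B y' x0 \<in> span B k \<alpha> ?Q" if x0: "x0 \<in> X" and y': "y' \<in> span B k \<alpha> Y" for x0 y'
  proof (rule span_mul_pre[OF Y Q _ _ y'])
    show "x0 \<in> bul B" using x0 X by blast
    show "\<forall>y\<in>Y. mul B y x0 \<in> span B k \<alpha> ?Q"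
    proof
      fix y0 assume y0: "y0 \<in> Y"
      have "mul B y0 x0 = mul B x0 y0" using x0 y0 X Y by (intro cs_mul_comm[OF csB]) auto
      thus "mul B y0 x0 \<in> span B k \<alpha> ?Q" using base[OF x0 y0] by simp
    qed
  qed
  have yb: "y \<in> bul B" using y span_bul[OF Y] by blast
  show ?thesis
  proof (rule span_mul_pre[OF X Q yb _ x])
    show "\<forall>x0\<in>X. mul B x0 y \<in> span B k \<alpha> ?Q"
    proof
      fix x0 assume x0: "x0 \<in> X"
      have "mul B x0 y = mul B y x0" using x0 yb X by (intro cs_mul_comm[OF csB]) auto
      thus "mul B x0 y \<in> span B k \<alpha> ?Q" using step1[OF x0 y] by simp
    qed
  qed
qed

definition pm :: "'b \<times> 'b \<Rightarrow> 'b" where "pm = (\<lambda>(x, y). mul B x y)"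

lemma An_mulI: "m \<in> bul B \<Longrightarrow> set ps \<subseteq> M1 \<times> M2 \<Longrightarrow> le B m (sumlist B (map pm ps)) \<Longrightarrow> m \<in> An_mul B M1 M2"
  unfolding An_mul_def pm_def by blast

lemma An_mulE: "m \<in> An_mul B M1 M2 \<Longrightarrow> (\<And>ps. m \<in> bul B \<Longrightarrow> set ps \<subseteq> M1 \<times> M2 \<Longrightarrow>
   le B m (sumlist B (map pm ps)) \<Longrightarrow> P) \<Longrightarrow> P"
  unfolding An_mul_def pm_def by blast

lemma pm_car: "X \<subseteq> bul B \<Longrightarrow> Y \<subseteq> bul B \<Longrightarrow> set ps \<subseteq> span B k \<alpha> X \<times> span B k \<alpha> Y \<Longrightarrow> set (map pm ps) \<subseteq> car B"
proof -
  assume X: "X \<subseteq> bul B" and Y: "Y \<subseteq> bul B" and ps: "set ps \<subseteq> span B k \<alpha> X \<times> span B k \<alpha> Y"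
  have "span B k \<alpha> X \<subseteq> bul B" "span B k \<alpha> Y \<subseteq> bul B" using span_bul X Y by blast+
  have "pm p \<in> bul B" if p: "p \<in> set ps" for p
  proof -
    obtain a b where ab: "p = (a, b)" by fastforce
    have "a \<in> bul B" "b \<in> bul B" using p ab ps \<open>span B k \<alpha> X \<subseteq> bul B\<close> \<open>span B k \<alpha> Y \<subseteq> bul B\<close> by blast+
    thus ?thesis using ab by (simp add: pm_def)
  qed
  thus ?thesis using bul_car by auto
qed

lemma An_mul_span:
  assumes X: "X \<subseteq> bul B" and Y: "Y \<subseteq> bul B"
  shows "An_mul B (span B k \<alpha> X) (span B k \<alpha> Y) = span B k \<alpha> (smul B X Y)"
proof -
  have Q: "smul B X Y \<subseteq> bul B" using smul_bul[OF X Y] .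
  show ?thesis
  proof
  show "An_mul B (span B k \<alpha> X) (span B k \<alpha> Y) \<subseteq> span B k \<alpha> (smul B X Y)"
  proof
    fix m assume "m \<in> An_mul B (span B k \<alpha> X) (span B k \<alpha> Y)"
    then obtain ps where h: "m \<in> bul B" "set ps \<subseteq> span B k \<alpha> X \<times> span B k \<alpha> Y"
      "le B m (sumlist B (map pm ps))" by (rule An_mulE)
    have "set (map pm ps) \<subseteq> span B k \<alpha> (smul B X Y)"
    proof
      fix w assume "w \<in> set (map pm ps)"
      then obtain x y where "(x, y) \<in> set ps" "w = mul B x y" unfolding pm_def by auto
      thus "w \<in> span B k \<alpha> (smul B X Y)" using h(2) span_prod[OF X Y] by blast
    qed
    thus "m \<in> span B k \<alpha> (smul B X Y)" using span_down[OF Q h(1) _ h(3)] by blast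
  qed
next
  let ?T = "An_mul B (span B k \<alpha> X) (span B k \<alpha> Y)"
  have lists: "set ms \<subseteq> ?T \<Longrightarrow> \<exists>ps. set ps \<subseteq> span B k \<alpha> X \<times> span B k \<alpha> Y \<and>
      le B (sumlist B ms) (sumlist B (map pm ps))" for ms
  proof (induction ms)
    case Nil
    have "le B (sumlist B []) (sumlist B (map pm []))" using le_refl by simp
    thus ?case by (metis empty_set empty_subsetI)
  next
    case (Cons m ms)
    then obtain ps2 where h2: "set ps2 \<subseteq> span B k \<alpha> X \<times> span B k \<alpha> Y"
      "le B (sumlist B ms) (sumlist B (map pm ps2))" by auto
    have "m \<in> ?T" using Cons.prems by simp
    then obtain ps1 where h1: "set ps1 \<subseteq> span B k \<alpha> X \<times> span B k \<alpha> Y"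
      "le B m (sumlist B (map pm ps1))" by (rule An_mulE)
    have "le B (sumlist B (m # ms)) (add B (sumlist B (map pm ps1)) (sumlist B (map pm ps2)))"
      using le_add2[OF h1(2) h2(2)] by simp
    also have "add B (sumlist B (map pm ps1)) (sumlist B (map pm ps2)) = sumlist B (map pm (ps1 @ ps2))"
      using sumlist_append[OF csB pm_car[OF X Y h1(1)] pm_car[OF X Y h2(1)]] by simp
    finally show ?case using h1(1) h2(1) by (metis Un_subset_iff set_append)
  qed
  have ks: "kspan B k \<alpha> ?T"
  proof (rule kspanI)
    show "?T \<subseteq> bul B" unfolding An_mul_def by blast
  next
    fix a m assume a: "a \<in> bul k" and m: "m \<in> ?T"
    then obtain ps where h: "m \<in> bul B" "set ps \<subseteq> span B k \<alpha> X \<times> span B k \<alpha> Y"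
      "le B m (sumlist B (map pm ps))" by (metis An_mulE)
    have ac: "\<alpha> a \<in> car B" using a by simp
    define g where "g = (\<lambda>(x::'b, y::'b). (mul B (\<alpha> a) x, y))"
    have "le B (mul B (\<alpha> a) m) (mul B (\<alpha> a) (sumlist B (map pm ps)))"
      using le_mull[OF h(3) ac] .
    also have "mul B (\<alpha> a) (sumlist B (map pm ps)) = sumlist B (map (mul B (\<alpha> a)) (map pm ps))"
      using sumlist_mul[OF csB ac pm_car[OF X Y h(2)]] .
    also have "map (mul B (\<alpha> a)) (map pm ps) = map pm (map g ps)"
    proof -
      have "mul B (\<alpha> a) (pm p) = pm (g p)" if "p \<in> set ps" for p
      proof -
        obtain x y where p: "p = (x, y)" by fastforce
        have "x \<in> bul B" "y \<in> bul B" using that h(2) span_bul[OF X] span_bul[OF Y] p by blast+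
        thus ?thesis using p ac by (simp add: pm_def g_def cs_mul_assoc[OF csB])
      qed
      thus ?thesis by simp
    qed
    finally have l: "le B (mul B (\<alpha> a) m) (sumlist B (map pm (map g ps)))" .
    have "set (map g ps) \<subseteq> span B k \<alpha> X \<times> span B k \<alpha> Y"
      using h(2) span_alpha[OF X a] unfolding g_def by auto
    moreover have "mul B (\<alpha> a) m \<in> bul B" using a h(1) by simp
    ultimately show "mul B (\<alpha> a) m \<in> ?T" using l by (intro An_mulI)
  next
    fix b as assume b: "b \<in> bul B" and as: "set as \<subseteq> ?T" and l: "le B b (sumlist B as)"
    obtain ps where h: "set ps \<subseteq> span B k \<alpha> X \<times> span B k \<alpha> Y"
      "le B (sumlist B as) (sumlist B (map pm ps))" using lists[OF as] by blast
    show "b \<in> ?T" using le_trans[OF l h(2)] h(1) b by (intro An_mulI)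
  qed
  have "smul B X Y \<subseteq> ?T"
  proof
    fix w assume w: "w \<in> smul B X Y"
    then obtain x y where xy: "x \<in> X" "y \<in> Y" "w = mul B x y" by (rule smul_memE)
    have wb: "w \<in> bul B" using w Q by blast
    have "set [(x, y)] \<subseteq> span B k \<alpha> X \<times> span B k \<alpha> Y" using xy span_sub[OF X] span_sub[OF Y] by auto
    moreover have "le B w (sumlist B (map pm [(x, y)]))" using wb le_refl xy by (simp add: pm_def)
    ultimately show "w \<in> ?T" using wb by (intro An_mulI)
  qed
  thus "span B k \<alpha> (smul B X Y) \<subseteq> ?T" using span_least[OF ks] by blast
qed
qed

end


context ctx begin

lemma set_memb: "set_mset (memb B a) = (if a = zer B then {} else {a})"
  by (simp add: memb_def)

lemma set_sum_memb: "set_mset (sum_list (map (memb B) bs)) = set bs - {zer B}"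
  by (induction bs) (auto simp: memb_def)

lemma set_mmul: "set_mset (mmul B X Y) = smul B (set_mset X) (set_mset Y)"
  by (auto simp: mmul_def smul_def)

lemma mmul_memb: "x \<in> car B \<Longrightarrow> m \<in> car B \<Longrightarrow> m \<noteq> zer B \<Longrightarrow> mmul B (memb B x) {#m#} = memb B (mul B x m)"
  by (auto simp: mmul_def memb_def)

lemma smul_span_sub:
  assumes X: "X \<subseteq> bul B" and Y: "Y \<subseteq> bul B" and Z: "Z \<subseteq> bul B" and XY: "X \<subseteq> span B k \<alpha> Y"
  shows "smul B X Z \<subseteq> span B k \<alpha> (smul B Y Z)"
proof
  fix w assume "w \<in> smul B X Z"
  then obtain x z where xz: "x \<in> X" "z \<in> Z" "w = mul B x z" by (rule smul_memE)
  have "z \<in> span B k \<alpha> Z" using xz(2) span_sub[OF Z] by blast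
  thus "w \<in> span B k \<alpha> (smul B Y Z)" using span_prod[OF Y Z] xz XY by blast
qed

lemma mon_le_inv: "mon_le B k \<alpha> X Y \<Longrightarrow> set_mset X \<subseteq> bul B - {zer B} \<and> set_mset Y \<subseteq> bul B - {zer B}
   \<and> set_mset X \<subseteq> span B k \<alpha> (set_mset Y)"
proof (induction rule: mon_le.induct)
  case (gen a bs)
  have bs0: "set bs - {zer B} \<subseteq> bul B" using gen.hyps by blast
  have "a \<in> span B k \<alpha> (set bs)" using span_down[OF gen.hyps(2) gen.hyps(1) _ gen.hyps(3)] span_sub[OF gen.hyps(2)] by blast
  hence "a \<in> span B k \<alpha> (set bs - {zer B})" using span_minus0[OF gen.hyps(2)] by simp
  hence aS: "a \<in> span B k \<alpha> (set bs - {zer B})" .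
  have e: "set_mset (sum_list (map (memb B) bs)) = set bs - {zer B}" by (rule set_sum_memb)
  have c3: "set_mset (memb B a) \<subseteq> span B k \<alpha> (set_mset (sum_list (map (memb B) bs)))"
  proof (cases "a = zer B")
    case True thus ?thesis by (simp add: memb_def)
  next
    case False
    hence ea: "set_mset (memb B a) = {a}" by (simp add: memb_def)
    show ?thesis unfolding e ea using aS by blast
  qed
  have c1: "set_mset (memb B a) \<subseteq> bul B - {zer B}" using gen.hyps by (auto simp: set_memb)
  have c2: "set_mset (sum_list (map (memb B) bs)) \<subseteq> bul B - {zer B}"
    unfolding set_sum_memb using gen.hyps by blast
  show ?case using c1 c2 c3 by blast
next
  case (kle c)
  have ab: "\<alpha> c \<in> bul B" using kle by simp
  have "\<alpha> c \<in> span B k \<alpha> (set_mset (memb B (one B)))" if nz: "\<alpha> c \<noteq> zer B"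
  proof (cases "one B = zer B")
    case True
    have "\<alpha> c = mul B (\<alpha> c) (one B)" using ab by simp
    also have "\<dots> = zer B" using True ab by simp
    finally show ?thesis using nz by simp
  next
    case False
    have "one B \<in> span B k \<alpha> {one B}" using span_sub[of "{one B}"] by simp
    hence "mul B (\<alpha> c) (one B) \<in> span B k \<alpha> {one B}" using span_alpha[of "{one B}" c "one B"] kle by simp
    thus ?thesis using False ab by (simp add: set_memb)
  qed
  thus ?case using ab by (auto simp: set_memb)
next
  case (refl X)
  thus ?case using span_sub[of "set_mset X"] by blast
next
  case (trans X Y Z)
  have "span B k \<alpha> (set_mset Y) \<subseteq> span B k \<alpha> (set_mset Z)"
    using trans.IH by (intro span_subI) auto
  thus ?case using trans.IH by blast
next
  case (addc X Y Z)
  have b: "set_mset Y \<union> set_mset Z \<subseteq> bul B" using addc by blast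
  have "span B k \<alpha> (set_mset Y) \<subseteq> span B k \<alpha> (set_mset Y \<union> set_mset Z)" using span_mono[OF _ b] by blast
  moreover have "set_mset Z \<subseteq> span B k \<alpha> (set_mset Y \<union> set_mset Z)" using span_sub[OF b] by blast
  ultimately show ?case using addc by auto
next
  case (mulc X Y Z)
  have "smul B (set_mset X) (set_mset Z) \<subseteq> span B k \<alpha> (smul B (set_mset Y) (set_mset Z))"
    using mulc by (intro smul_span_sub) auto
  moreover have "smul B (set_mset X) (set_mset Z) \<subseteq> bul B - {zer B}"
    "smul B (set_mset Y) (set_mset Z) \<subseteq> bul B - {zer B}"
    using smul_bul[of "set_mset X" "set_mset Z"] smul_bul[of "set_mset Y" "set_mset Z"] mulc
    unfolding smul_def by blast+
  ultimately show ?case by (simp add: set_mmul)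
qed

lemma bfin_iff: "X \<in> bfin B \<longleftrightarrow> finite X \<and> X \<subseteq> bul B - {zer B}"
  by (simp add: bfin_def)

lemma smul_nz: "zer B \<notin> smul B X Y" by (simp add: smul_def)

lemma smul_bfin: "X \<in> bfin B \<Longrightarrow> Z \<in> bfin B \<Longrightarrow> smul B X Z \<in> bfin B"
proof -
  assume X: "X \<in> bfin B" and Z: "Z \<in> bfin B"
  have "finite (smul B X Z)" using X Z smul_finite by (simp add: bfin_iff)
  moreover have "X \<subseteq> bul B" "Z \<subseteq> bul B" using X Z by (auto simp: bfin_iff)
  hence "smul B X Z \<subseteq> bul B" by (rule smul_bul)
  ultimately show ?thesis using smul_nz[of X Z] unfolding bfin_iff by blast
qed

lemma bend_inv: "bend_cong B k \<alpha> X Y \<Longrightarrow> X \<in> bfin B \<and> Y \<in> bfin B \<and> span B k \<alpha> X = span B k \<alpha> Y"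
proof (induction rule: bend_cong.induct)
  case (gen a bs)
  have bs: "set_mset bs \<subseteq> bul B" using gen.hyps by blast
  have sa: "semb B a \<subseteq> span B k \<alpha> (set_mset bs)"
    using mon_le_inv[OF gen.hyps(3)] by (auto simp: semb_def set_memb)
  have ab: "semb B a \<union> set_mset bs \<subseteq> bul B" using gen.hyps by (auto simp: semb_def)
  have "span B k \<alpha> (semb B a \<union> set_mset bs) = span B k \<alpha> (set_mset bs)"
    using sa span_sub[OF bs] span_sub[OF ab] ab bs by (intro span_eqI) auto
  thus ?case using gen.hyps by (auto simp: bfin_iff semb_def)
next
  case (refl X) thus ?case by simp
next
  case (sym X Y) thus ?case by simp
next
  case (trans X Y Z) thus ?case by simp
next
  case (addc X Y Z)
  have b: "X \<subseteq> bul B" "Y \<subseteq> bul B" "Z \<subseteq> bul B" using addc by (auto simp: bfin_iff)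
  have "X \<union> Z \<subseteq> span B k \<alpha> (Y \<union> Z)"
  proof -
    have "X \<subseteq> span B k \<alpha> Y" using addc span_sub[OF b(1)] by simp
    moreover have "span B k \<alpha> Y \<subseteq> span B k \<alpha> (Y \<union> Z)" using span_mono b by blast
    moreover have "Z \<subseteq> span B k \<alpha> (Y \<union> Z)" using span_sub[of "Y \<union> Z"] b by blast
    ultimately show ?thesis by blast
  qed
  moreover have "Y \<union> Z \<subseteq> span B k \<alpha> (X \<union> Z)"
  proof -
    have "Y \<subseteq> span B k \<alpha> X" using addc span_sub[OF b(2)] by simp
    moreover have "span B k \<alpha> X \<subseteq> span B k \<alpha> (X \<union> Z)" using span_mono b by blast
    moreover have "Z \<subseteq> span B k \<alpha> (X \<union> Z)" using span_sub[of "X \<union> Z"] b by blast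
    ultimately show ?thesis by blast
  qed
  ultimately have "span B k \<alpha> (X \<union> Z) = span B k \<alpha> (Y \<union> Z)" using b by (intro span_eqI) auto
  thus ?case using addc by (auto simp: bfin_iff)
next
  case (mulc X Y Z)
  have b: "X \<subseteq> bul B" "Y \<subseteq> bul B" "Z \<subseteq> bul B" using mulc by (auto simp: bfin_iff)
  have f: "finite X" "finite Y" "finite Z" using mulc by (auto simp: bfin_iff)
  have s1: "smul B X Z \<subseteq> span B k \<alpha> (smul B Y Z)"
    using b mulc span_sub[OF b(1)] by (intro smul_span_sub) auto
  have s2: "smul B Y Z \<subseteq> span B k \<alpha> (smul B X Z)"
    using b mulc span_sub[OF b(2)] by (intro smul_span_sub) auto
  have "span B k \<alpha> (smul B X Z) = span B k \<alpha> (smul B Y Z)"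
    using s1 s2 smul_bul b by (intro span_eqI) auto
  moreover have "smul B X Z \<in> bfin B" "smul B Y Z \<in> bfin B"
    using smul_bfin mulc by blast+
  ultimately show ?case using mulc by simp
qed

end


context ctx begin

lemma bfin_insert: "Y \<in> bfin B \<Longrightarrow> m \<in> bul B \<Longrightarrow> m \<noteq> zer B \<Longrightarrow> insert m Y \<in> bfin B"
  by (simp add: bfin_iff)

lemma bfin_Un: "X \<in> bfin B \<Longrightarrow> Y \<in> bfin B \<Longrightarrow> X \<union> Y \<in> bfin B"
  by (simp add: bfin_iff)

lemma absorb_fin:
  assumes Y: "Y \<in> bfin B"
  shows "finite N \<Longrightarrow> N \<subseteq> bul B - {zer B} \<Longrightarrow> (\<forall>n\<in>N. bend_cong B k \<alpha> (insert n Y) Y)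
     \<Longrightarrow> bend_cong B k \<alpha> (N \<union> Y) Y"
proof (induction N rule: finite_induct)
  case empty
  show ?case using bend_cong.refl[OF Y] by simp
next
  case (insert n N)
  have IH: "bend_cong B k \<alpha> (N \<union> Y) Y" using insert by blast
  have h: "bend_cong B k \<alpha> (insert n Y) Y" using insert by blast
  have NY: "N \<union> Y \<in> bfin B" using insert Y by (simp add: bfin_iff)
  have "bend_cong B k \<alpha> (insert n Y \<union> (N \<union> Y)) (Y \<union> (N \<union> Y))" using bend_cong.addc[OF h NY] .
  moreover have "insert n Y \<union> (N \<union> Y) = insert n N \<union> Y" "Y \<union> (N \<union> Y) = N \<union> Y" by blast+
  ultimately have "bend_cong B k \<alpha> (insert n N \<union> Y) (N \<union> Y)" by simp
  thus ?case using IH bend_cong.trans by blast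
qed

lemma absorb_span:
  assumes Y: "Y \<in> bfin B" and m0: "m0 \<in> span B k \<alpha> Y" and nz: "m0 \<noteq> zer B"
  shows "bend_cong B k \<alpha> (insert m0 Y) Y"
proof -
  have Yb: "Y \<subseteq> bul B" using Y by (auto simp: bfin_iff)
  let ?M = "{m \<in> bul B. m = zer B \<or> bend_cong B k \<alpha> (insert m Y) Y}"
  have ks: "kspan B k \<alpha> ?M"
  proof (rule kspanI)
    show "?M \<subseteq> bul B" by blast
  next
    fix a m assume a: "a \<in> bul k" and m: "m \<in> ?M"
    have mb: "m \<in> bul B" using m by blast
    let ?p = "mul B (\<alpha> a) m"
    have pb: "?p \<in> bul B" using a mb by simp
    show "?p \<in> ?M"
    proof (cases "?p = zer B")
      case True thus ?thesis using pb by simp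
    next
      case False
      have mnz: "m \<noteq> zer B" using False a by auto
      have cm: "bend_cong B k \<alpha> (insert m Y) Y" using m mnz by blast
      have ml: "mon_le B k \<alpha> (memb B ?p) {#m#}"
      proof -
        have "mon_le B k \<alpha> (memb B (\<alpha> a)) (memb B (one B))" by (rule mon_le.kle[OF a])
        hence "mon_le B k \<alpha> (mmul B (memb B (\<alpha> a)) {#m#}) (mmul B (memb B (one B)) {#m#})"
          using mb mnz by (intro mon_le.mulc) auto
        moreover have "mmul B (memb B (\<alpha> a)) {#m#} = memb B ?p" using mmul_memb a mb mnz by simp
        moreover have "mmul B (memb B (one B)) {#m#} = {#m#}"
          using mmul_memb[of "one B" m] mb mnz by (simp add: memb_def)
        ultimately show ?thesis by simp
      qed
      have "bend_cong B k \<alpha> (semb B ?p \<union> set_mset {#m#}) (set_mset {#m#})"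
        using pb mb mnz ml by (intro bend_cong.gen) auto
      moreover have "semb B ?p \<union> set_mset {#m#} = insert ?p {m}" using False by (auto simp: semb_def)
      ultimately have g: "bend_cong B k \<alpha> (insert ?p {m}) {m}" by simp
      have "bend_cong B k \<alpha> (insert ?p {m} \<union> Y) ({m} \<union> Y)" using bend_cong.addc[OF g Y] .
      moreover have "insert ?p {m} \<union> Y = insert ?p (insert m Y)" "{m} \<union> Y = insert m Y" by blast+
      ultimately have s1: "bend_cong B k \<alpha> (insert ?p (insert m Y)) (insert m Y)" by simp
      have s2: "bend_cong B k \<alpha> (insert ?p (insert m Y)) Y" using bend_cong.trans[OF s1 cm] .
      have ipY: "insert ?p Y \<in> bfin B" using bfin_insert[OF Y pb False] .
      have "bend_cong B k \<alpha> (insert m Y \<union> insert ?p Y) (Y \<union> insert ?p Y)" using bend_cong.addc[OF cm ipY] .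
      moreover have "insert m Y \<union> insert ?p Y = insert ?p (insert m Y)" "Y \<union> insert ?p Y = insert ?p Y" by blast+
      ultimately have s3: "bend_cong B k \<alpha> (insert ?p (insert m Y)) (insert ?p Y)" by simp
      have "bend_cong B k \<alpha> (insert ?p Y) Y" using bend_cong.trans[OF bend_cong.sym[OF s3] s2] .
      thus ?thesis using pb by blast
    qed
  next
    fix b as assume b: "b \<in> bul B" and as: "set as \<subseteq> ?M" and l: "le B b (sumlist B as)"
    show "b \<in> ?M"
    proof (cases "b = zer B")
      case True thus ?thesis using b by simp
    next
      case False
      let ?N = "set as - {zer B}"
      have asb: "set as \<subseteq> bul B" using as by blast
      have ml: "mon_le B k \<alpha> (memb B b) (sum_list (map (memb B) as))" by (rule mon_le.gen[OF b asb l])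
      have e: "set_mset (sum_list (map (memb B) as)) = ?N" by (rule set_sum_memb)
      have "bend_cong B k \<alpha> (semb B b \<union> set_mset (sum_list (map (memb B) as))) (set_mset (sum_list (map (memb B) as)))"
        using b ml asb e by (intro bend_cong.gen) auto
      moreover have "semb B b = {b}" using False by (simp add: semb_def)
      ultimately have g: "bend_cong B k \<alpha> (insert b ?N) ?N" unfolding e by simp
      have Nb: "finite ?N" "?N \<subseteq> bul B - {zer B}" using asb by auto
      have Nc: "\<forall>n\<in>?N. bend_cong B k \<alpha> (insert n Y) Y" using as by blast
      have NY: "bend_cong B k \<alpha> (?N \<union> Y) Y" using absorb_fin[OF Y Nb Nc] .
      have "bend_cong B k \<alpha> (insert b ?N \<union> Y) (?N \<union> Y)" using bend_cong.addc[OF g Y] .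
      moreover have "insert b ?N \<union> Y = insert b (?N \<union> Y)" by blast
      ultimately have s1: "bend_cong B k \<alpha> (insert b (?N \<union> Y)) Y" using bend_cong.trans NY by metis
      have ibY: "insert b Y \<in> bfin B" using bfin_insert[OF Y b False] .
      have "bend_cong B k \<alpha> (?N \<union> Y \<union> insert b Y) (Y \<union> insert b Y)" using bend_cong.addc[OF NY ibY] .
      moreover have "?N \<union> Y \<union> insert b Y = insert b (?N \<union> Y)" "Y \<union> insert b Y = insert b Y" by blast+
      ultimately have s2: "bend_cong B k \<alpha> (insert b (?N \<union> Y)) (insert b Y)" by simp
      have "bend_cong B k \<alpha> (insert b Y) Y" using bend_cong.trans[OF bend_cong.sym[OF s2] s1] .
      thus ?thesis using b by blast
    qed
  qed
  have "Y \<subseteq> ?M"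
  proof
    fix y assume y: "y \<in> Y"
    have "insert y Y = Y" using y by blast
    thus "y \<in> ?M" using bend_cong.refl[OF Y] y Yb by auto
  qed
  hence "span B k \<alpha> Y \<subseteq> ?M" using span_least[OF ks] by blast
  thus ?thesis using m0 nz by blast
qed

lemma bend_complete:
  assumes X: "X \<in> bfin B" and Y: "Y \<in> bfin B" and eq: "span B k \<alpha> X = span B k \<alpha> Y"
  shows "bend_cong B k \<alpha> X Y"
proof -
  have Xb: "X \<subseteq> bul B" "finite X" "X \<subseteq> bul B - {zer B}" using X by (auto simp: bfin_iff)
  have Yb: "Y \<subseteq> bul B" "finite Y" "Y \<subseteq> bul B - {zer B}" using Y by (auto simp: bfin_iff)
  have "\<forall>n\<in>X. bend_cong B k \<alpha> (insert n Y) Y"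
    using absorb_span[OF Y] span_sub[OF Xb(1)] eq Xb(3) by blast
  hence 1: "bend_cong B k \<alpha> (X \<union> Y) Y" using absorb_fin[OF Y Xb(2) Xb(3)] by blast
  have "\<forall>n\<in>Y. bend_cong B k \<alpha> (insert n X) X"
    using absorb_span[OF X] span_sub[OF Yb(1)] eq Yb(3) by blast
  hence 2: "bend_cong B k \<alpha> (Y \<union> X) X" using absorb_fin[OF X Yb(2) Yb(3)] by blast
  have "Y \<union> X = X \<union> Y" by blast
  hence 3: "bend_cong B k \<alpha> (X \<union> Y) X" using 2 by simp
  show ?thesis using bend_cong.trans[OF bend_cong.sym[OF 3] 1] .
qed

lemma class_eq: "X \<in> bfin B \<Longrightarrow> bend_rel B k \<alpha> `` {X} = {Z \<in> bfin B. span B k \<alpha> Z = span B k \<alpha> X}"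
proof (rule set_eqI)
  fix Z assume X: "X \<in> bfin B"
  have "Z \<in> bend_rel B k \<alpha> `` {X} \<longleftrightarrow> bend_cong B k \<alpha> X Z" by (simp add: bend_rel_def)
  also have "\<dots> \<longleftrightarrow> Z \<in> bfin B \<and> span B k \<alpha> Z = span B k \<alpha> X"
  proof
    assume "bend_cong B k \<alpha> X Z" thus "Z \<in> bfin B \<and> span B k \<alpha> Z = span B k \<alpha> X"
      using bend_inv by metis
  next
    assume "Z \<in> bfin B \<and> span B k \<alpha> Z = span B k \<alpha> X"
    thus "bend_cong B k \<alpha> X Z" using bend_complete[OF X] by simp
  qed
  finally show "Z \<in> bend_rel B k \<alpha> `` {X} \<longleftrightarrow> Z \<in> {Z \<in> bfin B. span B k \<alpha> Z = span B k \<alpha> X}" by simp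
qed

lemma An_iff: "M \<in> An B k \<alpha> \<longleftrightarrow> (\<exists>X\<in>bfin B. M = span B k \<alpha> X)"
proof
  assume "M \<in> An B k \<alpha>"
  then obtain as where as: "set as \<subseteq> bul B" "M = span B k \<alpha> (set as)" unfolding An_def by blast
  have "set as - {zer B} \<in> bfin B" using as by (auto simp: bfin_iff)
  moreover have "M = span B k \<alpha> (set as - {zer B})" using as span_minus0 by simp
  ultimately show "\<exists>X\<in>bfin B. M = span B k \<alpha> X" by blast
next
  assume "\<exists>X\<in>bfin B. M = span B k \<alpha> X"
  then obtain X where X: "X \<in> bfin B" "M = span B k \<alpha> X" by blast
  obtain as where "set as = X" using X finite_list by (auto simp: bfin_iff)
  thus "M \<in> An B k \<alpha>" using X unfolding An_def by (auto simp: bfin_iff)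
qed

lemma An_span: "set as \<subseteq> bul B \<Longrightarrow> span B k \<alpha> (set as) \<in> An B k \<alpha>"
  unfolding An_def by blast

lemma span_semb: "a \<in> bul B \<Longrightarrow> span B k \<alpha> (semb B a) = span B k \<alpha> {a}"
proof -
  assume a: "a \<in> bul B"
  have "semb B a = {a} - {zer B}" by (auto simp: semb_def)
  thus ?thesis using span_minus0[of "{a}"] a by simp
qed

lemma semb_bfin: "a \<in> bul B \<Longrightarrow> semb B a \<in> bfin B"
  by (simp add: semb_def bfin_iff)

lemma UN_const2: "A \<noteq> {} \<Longrightarrow> C \<noteq> {} \<Longrightarrow> (\<And>x y. x \<in> A \<Longrightarrow> y \<in> C \<Longrightarrow> f x y = c) \<Longrightarrow> (\<Union>x\<in>A. \<Union>y\<in>C. f x y) = c"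
proof -
  assume A: "A \<noteq> {}" and C: "C \<noteq> {}" and f: "\<And>x y. x \<in> A \<Longrightarrow> y \<in> C \<Longrightarrow> f x y = c"
  have "(\<Union>x\<in>A. \<Union>y\<in>C. f x y) = (\<Union>x\<in>A. \<Union>y\<in>C. c)" using f by simp
  also have "\<dots> = c" using A C by simp
  finally show ?thesis .
qed

lemma iso:
  "\<exists>\<phi>. bij_betw \<phi> (An B k \<alpha>) (car (Bend_srng B k \<alpha>)) \<and>
              srng_hom (An_srng B k \<alpha>) (Bend_srng B k \<alpha>) \<phi> \<and>
              (\<forall>a\<in>bul B. \<phi> (span B k \<alpha> {a}) = bend_rel B k \<alpha> `` {semb B a})"
proof -
  define \<phi> where "\<phi> = (\<lambda>M. {Z \<in> bfin B. span B k \<alpha> Z = M})"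
  have phiX: "\<phi> (span B k \<alpha> X) = bend_rel B k \<alpha> `` {X}" if "X \<in> bfin B" for X
    using class_eq[OF that] unfolding \<phi>_def by simp
  have carB: "car (Bend_srng B k \<alpha>) = bfin B // bend_rel B k \<alpha>" by (simp add: Bend_srng_def)
  have phi_car: "\<phi> M \<in> bfin B // bend_rel B k \<alpha>" if MA: "M \<in> An B k \<alpha>" for M
  proof -
    obtain X where "X \<in> bfin B" "M = span B k \<alpha> X" using An_iff[THEN iffD1, OF MA] by blast
    hence "\<phi> M = bend_rel B k \<alpha> `` {X}" using phiX by simp
    thus ?thesis using \<open>X \<in> bfin B\<close> by (simp add: quotientI)
  qed
  have phi_ne: "\<phi> M \<noteq> {}" if MA: "M \<in> An B k \<alpha>" for M
  proof -
    obtain X where "X \<in> bfin B" "M = span B k \<alpha> X" using An_iff[THEN iffD1, OF MA] by blast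
    hence "X \<in> \<phi> M" unfolding \<phi>_def by simp
    thus ?thesis by blast
  qed
  have bfin_b: "X \<subseteq> bul B" if "X \<in> bfin B" for X using that by (auto simp: bfin_iff)
  have bij: "bij_betw \<phi> (An B k \<alpha>) (car (Bend_srng B k \<alpha>))"
    unfolding bij_betw_def
  proof
    show "inj_on \<phi> (An B k \<alpha>)"
    proof (rule inj_onI)
      fix M1 M2 assume M: "M1 \<in> An B k \<alpha>" "M2 \<in> An B k \<alpha>" "\<phi> M1 = \<phi> M2"
      obtain X where X1: "X \<in> \<phi> M1" using phi_ne[OF M(1)] by blast
      hence X2: "X \<in> \<phi> M2" using M(3) by simp
      have "span B k \<alpha> X = M1" using X1 unfolding \<phi>_def by simp
      moreover have "span B k \<alpha> X = M2" using X2 unfolding \<phi>_def by simp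
      ultimately show "M1 = M2" by simp
    qed
    show "\<phi> ` An B k \<alpha> = car (Bend_srng B k \<alpha>)"
    proof
      show "\<phi> ` An B k \<alpha> \<subseteq> car (Bend_srng B k \<alpha>)" unfolding carB using phi_car by blast
      show "car (Bend_srng B k \<alpha>) \<subseteq> \<phi> ` An B k \<alpha>"
      proof
        fix P assume "P \<in> car (Bend_srng B k \<alpha>)"
        then obtain X where X: "X \<in> bfin B" "P = bend_rel B k \<alpha> `` {X}"
          unfolding carB quotient_def by blast
        hence "P = \<phi> (span B k \<alpha> X)" using phiX by simp
        moreover have "span B k \<alpha> X \<in> An B k \<alpha>" using X(1) An_iff[THEN iffD2] by blast
        ultimately show "P \<in> \<phi> ` An B k \<alpha>" by blast
      qed
    qed
  qed
  have addh: "\<phi> (An_add B M1 M2) = (\<Union>X\<in>\<phi> M1. \<Union>Y\<in>\<phi> M2. bend_rel B k \<alpha> `` {X \<union> Y})"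
    if M: "M1 \<in> An B k \<alpha>" "M2 \<in> An B k \<alpha>" for M1 M2
  proof -
    have eq: "bend_rel B k \<alpha> `` {X \<union> Y} = \<phi> (An_add B M1 M2)" if XY: "X \<in> \<phi> M1" "Y \<in> \<phi> M2" for X Y
    proof -
    have b: "X \<in> bfin B" "Y \<in> bfin B" "span B k \<alpha> X = M1" "span B k \<alpha> Y = M2" using XY unfolding \<phi>_def by auto
    have "bend_rel B k \<alpha> `` {X \<union> Y} = \<phi> (span B k \<alpha> (X \<union> Y))" using phiX[OF bfin_Un[OF b(1) b(2)]] by simp
    also have "span B k \<alpha> (X \<union> Y) = An_add B M1 M2"
      using An_add_span[OF bfin_b[OF b(1)] bfin_b[OF b(2)]] b by simp
    finally show ?thesis .
    qed
    show ?thesis using UN_const2[where f="\<lambda>X Y. bend_rel B k \<alpha> `` {X \<union> Y}", OF phi_ne[OF M(1)] phi_ne[OF M(2)] eq] by simp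
  qed
  have mulh: "\<phi> (An_mul B M1 M2) = (\<Union>X\<in>\<phi> M1. \<Union>Y\<in>\<phi> M2. bend_rel B k \<alpha> `` {smul B X Y})"
    if M: "M1 \<in> An B k \<alpha>" "M2 \<in> An B k \<alpha>" for M1 M2
  proof -
    have eq: "bend_rel B k \<alpha> `` {smul B X Y} = \<phi> (An_mul B M1 M2)" if XY: "X \<in> \<phi> M1" "Y \<in> \<phi> M2" for X Y
    proof -
    have b: "X \<in> bfin B" "Y \<in> bfin B" "span B k \<alpha> X = M1" "span B k \<alpha> Y = M2" using XY unfolding \<phi>_def by auto
    have "bend_rel B k \<alpha> `` {smul B X Y} = \<phi> (span B k \<alpha> (smul B X Y))" using phiX[OF smul_bfin[OF b(1) b(2)]] by simp
    also have "span B k \<alpha> (smul B X Y) = An_mul B M1 M2"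
      using An_mul_span[OF bfin_b[OF b(1)] bfin_b[OF b(2)]] b by simp
    finally show ?thesis .
    qed
    show ?thesis using UN_const2[where f="\<lambda>X Y. bend_rel B k \<alpha> `` {smul B X Y}", OF phi_ne[OF M(1)] phi_ne[OF M(2)] eq] by simp
  qed
  have zh: "\<phi> (span B k \<alpha> {}) = bend_rel B k \<alpha> `` {{}}" using phiX[of "{}"] by (simp add: bfin_iff)
  have oh: "\<phi> (span B k \<alpha> {one B}) = bend_rel B k \<alpha> `` {semb B (one B)}"
    using phiX[OF semb_bfin[of "one B"]] span_semb[of "one B"] by simp
  have hom: "srng_hom (An_srng B k \<alpha>) (Bend_srng B k \<alpha>) \<phi>"
    unfolding srng_hom_def
  proof (intro conjI ballI)
    fix x assume "x \<in> car (An_srng B k \<alpha>)"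
    thus "\<phi> x \<in> car (Bend_srng B k \<alpha>)" using phi_car carB by (simp add: An_srng_def)
  next
    show "\<phi> (zer (An_srng B k \<alpha>)) = zer (Bend_srng B k \<alpha>)" using zh by (simp add: An_srng_def Bend_srng_def)
  next
    show "\<phi> (one (An_srng B k \<alpha>)) = one (Bend_srng B k \<alpha>)" using oh by (simp add: An_srng_def Bend_srng_def)
  next
    fix x y assume xy: "x \<in> car (An_srng B k \<alpha>)" "y \<in> car (An_srng B k \<alpha>)"
    hence xy': "x \<in> An B k \<alpha>" "y \<in> An B k \<alpha>" by (simp_all add: An_srng_def)
    show "\<phi> (add (An_srng B k \<alpha>) x y) = add (Bend_srng B k \<alpha>) (\<phi> x) (\<phi> y)"
      using addh[OF xy'] by (simp add: An_srng_def Bend_srng_def)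
    show "\<phi> (mul (An_srng B k \<alpha>) x y) = mul (Bend_srng B k \<alpha>) (\<phi> x) (\<phi> y)"
      using mulh[OF xy'] by (simp add: An_srng_def Bend_srng_def)
  qed
  have sing: "\<forall>a\<in>bul B. \<phi> (span B k \<alpha> {a}) = bend_rel B k \<alpha> `` {semb B a}"
  proof
    fix a assume a: "a \<in> bul B"
    show "\<phi> (span B k \<alpha> {a}) = bend_rel B k \<alpha> `` {semb B a}"
      using phiX[OF semb_bfin[OF a]] span_semb[OF a] by simp
  qed
  show ?thesis using bij hom sing by blast
qed

end


context
  fixes S :: "('s, 'p) srng_scheme"
  assumes idS: "idem_srng S"
begin
lemma csS: "comm_srng S" using idS by (simp add: idem_srng_def)
lemma idem: "x \<in> car S \<Longrightarrow> add S x x = x"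
proof -
  assume x: "x \<in> car S"
  have "add S x x = add S (mul S x (one S)) (mul S x (one S))" using x csS by simp
  also have "\<dots> = mul S x (add S (one S) (one S))" using x csS by (simp add: cs_distr)
  also have "\<dots> = x" using idS x csS by (simp add: idem_srng_def)
  finally show ?thesis .
qed
lemma sle_trans: "x \<in> car S \<Longrightarrow> y \<in> car S \<Longrightarrow> z \<in> car S \<Longrightarrow> add S x y = y \<Longrightarrow> add S y z = z \<Longrightarrow> add S x z = z"
  by (metis cs_add_assoc[OF csS])
lemma sle_antisym: "x \<in> car S \<Longrightarrow> y \<in> car S \<Longrightarrow> add S x y = y \<Longrightarrow> add S y x = x \<Longrightarrow> x = y"
  by (metis cs_add_comm[OF csS])
lemma sle_mem: "set xs \<subseteq> car S \<Longrightarrow> x \<in> set xs \<Longrightarrow> add S x (sumlist S xs) = sumlist S xs"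
proof (induction xs)
  case Nil thus ?case by simp
next
  case (Cons y ys)
  have c: "y \<in> car S" "set ys \<subseteq> car S" "x \<in> car S" using Cons.prems by auto
  show ?case
  proof (cases "x = y")
    case True
    have "add S x (add S y (sumlist S ys)) = add S (add S x y) (sumlist S ys)"
      using c csS by (simp add: cs_add_assoc)
    thus ?thesis using True idem c by simp
  next
    case False
    hence "x \<in> set ys" using Cons.prems by simp
    hence "add S x (sumlist S ys) = sumlist S ys" using Cons c by simp
    moreover have "add S x (add S y (sumlist S ys)) = add S y (add S x (sumlist S ys))"
      using c csS by (simp add: cs_add_lc)
    ultimately show ?thesis by simp
  qed
qed
lemma sum_le: "set xs \<subseteq> car S \<Longrightarrow> T \<in> car S \<Longrightarrow> (\<forall>x\<in>set xs. add S x T = T) \<Longrightarrow> add S (sumlist S xs) T = T"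
proof (induction xs)
  case Nil thus ?case using csS by simp
next
  case (Cons y ys)
  have c: "y \<in> car S" "set ys \<subseteq> car S" using Cons.prems by auto
  have "add S (add S y (sumlist S ys)) T = add S y (add S (sumlist S ys) T)"
    using c Cons.prems csS by (simp add: cs_add_assoc)
  also have "\<dots> = T" using Cons c by simp
  finally show ?case by simp
qed
end

context ctx begin

context
  fixes S :: "('s, 'p) srng_scheme" and w :: "'b \<Rightarrow> 's"
  assumes idS: "idem_srng S" and wV: "w \<in> Val B k \<alpha> S"
begin

lemma csS': "comm_srng S" using idS by (simp add: idem_srng_def)
lemma wcar: "a \<in> bul B \<Longrightarrow> w a \<in> car S" using wV by (simp add: Val_def)
lemma wcars: "set as \<subseteq> bul B \<Longrightarrow> set (map w as) \<subseteq> car S" using wcar by auto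
lemma w0: "w (zer B) = zer S" using wV by (simp add: Val_def)
lemma w1: "w (one B) = one S" using wV by (simp add: Val_def)
lemma wmul: "a \<in> bul B \<Longrightarrow> b \<in> bul B \<Longrightarrow> w (mul B a b) = mul S (w a) (w b)"
  using wV unfolding Val_def by blast
lemma wval: "a \<in> bul B \<Longrightarrow> set bs \<subseteq> bul B \<Longrightarrow> le B a (sumlist B bs) \<Longrightarrow>
   add S (w a) (sumlist S (map w bs)) = sumlist S (map w bs)"
  using wV unfolding Val_def by blast
lemma wint: "c \<in> bul k \<Longrightarrow> add S (w (\<alpha> c)) (one S) = one S"
  using wV unfolding Val_def by blast
lemma wext: "w \<in> extensional (bul B)" using wV by (simp add: Val_def)

lemma val_span_le:
  assumes as: "set as \<subseteq> bul B" and m: "m \<in> span B k \<alpha> (set as)"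
  shows "add S (w m) (sumlist S (map w as)) = sumlist S (map w as)"
proof -
  let ?T = "sumlist S (map w as)"
  have Tc: "?T \<in> car S" using sumlist_car[OF csS' wcars[OF as]] .
  let ?M = "{m \<in> bul B. add S (w m) ?T = ?T}"
  have ks: "kspan B k \<alpha> ?M"
  proof (rule kspanI)
    show "?M \<subseteq> bul B" by blast
  next
    fix a m assume a: "a \<in> bul k" and m: "m \<in> ?M"
    have mb: "m \<in> bul B" and mT: "add S (w m) ?T = ?T" using m by auto
    have ab: "\<alpha> a \<in> bul B" using a by simp
    have "add S (mul S (w (\<alpha> a)) (w m)) (w m) = mul S (add S (w (\<alpha> a)) (one S)) (w m)"
      using wcar[OF ab] wcar[OF mb] csS' by (simp add: cs_distr_r)
    also have "\<dots> = w m" using wint[OF a] wcar[OF mb] csS' by simp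
    finally have "add S (w (mul B (\<alpha> a) m)) (w m) = w m" using wmul[OF ab mb] by simp
    hence "add S (w (mul B (\<alpha> a) m)) ?T = ?T"
      using sle_trans[OF idS _ _ Tc _ mT] wcar[OF ab] wcar[OF mb] wcar[OF mul_bul[OF ab mb]] by blast
    thus "mul B (\<alpha> a) m \<in> ?M" using ab mb by simp
  next
    fix b bs assume b: "b \<in> bul B" and bs: "set bs \<subseteq> ?M" and l: "le B b (sumlist B bs)"
    have bsb: "set bs \<subseteq> bul B" using bs by blast
    have 1: "add S (w b) (sumlist S (map w bs)) = sumlist S (map w bs)" using wval[OF b bsb l] .
    have 2: "add S (sumlist S (map w bs)) ?T = ?T"
      using sum_le[OF idS wcars[OF bsb] Tc] bs by auto
    have "add S (w b) ?T = ?T"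
      using sle_trans[OF idS wcar[OF b] sumlist_car[OF csS' wcars[OF bsb]] Tc 1 2] .
    thus "b \<in> ?M" using b by simp
  qed
  have "set as \<subseteq> ?M" using as sle_mem[OF idS wcars[OF as]] by auto
  hence "span B k \<alpha> (set as) \<subseteq> ?M" using span_least[OF ks] by blast
  thus ?thesis using m by blast
qed

lemma val_wd:
  assumes as: "set as \<subseteq> bul B" and bs: "set bs \<subseteq> bul B" and eq: "span B k \<alpha> (set as) = span B k \<alpha> (set bs)"
  shows "sumlist S (map w as) = sumlist S (map w bs)"
proof -
  have Ta: "sumlist S (map w as) \<in> car S" using sumlist_car[OF csS' wcars[OF as]] .
  have Tb: "sumlist S (map w bs) \<in> car S" using sumlist_car[OF csS' wcars[OF bs]] .
  have 1: "add S (sumlist S (map w bs)) (sumlist S (map w as)) = sumlist S (map w as)"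
  proof (rule sum_le[OF idS wcars[OF bs] Ta], rule ballI)
    fix x assume "x \<in> set (map w bs)"
    then obtain b where b: "b \<in> set bs" "x = w b" by auto
    have "b \<in> span B k \<alpha> (set as)" using eq span_sub[OF bs] b by blast
    thus "add S x (sumlist S (map w as)) = sumlist S (map w as)" using val_span_le[OF as] b by simp
  qed
  have 2: "add S (sumlist S (map w as)) (sumlist S (map w bs)) = sumlist S (map w bs)"
  proof (rule sum_le[OF idS wcars[OF as] Tb], rule ballI)
    fix x assume "x \<in> set (map w as)"
    then obtain b where b: "b \<in> set as" "x = w b" by auto
    have "b \<in> span B k \<alpha> (set bs)" using eq span_sub[OF as] b by blast
    thus "add S x (sumlist S (map w bs)) = sumlist S (map w bs)" using val_span_le[OF bs] b by simp
  qed
  show ?thesis using sle_antisym[OF idS Ta Tb 2 1] .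
qed

end

definition homF :: "('s, 'p) srng_scheme \<Rightarrow> ('b \<Rightarrow> 's) \<Rightarrow> 'b set \<Rightarrow> 's" where
  "homF S w = restrict (\<lambda>M. sumlist S (map w (SOME as. set as \<subseteq> bul B \<and> M = span B k \<alpha> (set as)))) (An B k \<alpha>)"

lemma homF_eq:
  assumes idS: "idem_srng S" and wV: "w \<in> Val B k \<alpha> S" and as: "set as \<subseteq> bul B"
  shows "homF S w (span B k \<alpha> (set as)) = sumlist S (map w as)"
proof -
  let ?P = "\<lambda>bs. set bs \<subseteq> bul B \<and> span B k \<alpha> (set as) = span B k \<alpha> (set bs)"
  have "?P as" using as by simp
  hence "?P (SOME bs. ?P bs)" by (rule someI)
  hence "sumlist S (map w (SOME bs. ?P bs)) = sumlist S (map w as)"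
    using val_wd[OF idS wV as] by metis
  moreover have "span B k \<alpha> (set as) \<in> An B k \<alpha>" using An_span[OF as] .
  ultimately show ?thesis unfolding homF_def by simp
qed


lemma An_obtain: "M \<in> An B k \<alpha> \<Longrightarrow> (\<And>as. set as \<subseteq> bul B \<Longrightarrow> M = span B k \<alpha> (set as) \<Longrightarrow> P) \<Longrightarrow> P"
  unfolding An_def by blast

lemma concat_map_w:
  assumes "\<forall>a\<in>set as. \<forall>b\<in>set bs. w (mul B a b) = mul S (w a) (w b)"
  shows "map w (concat (map (\<lambda>a. map (mul B a) bs) as)) = concat (map (\<lambda>x. map (mul S x) (map w bs)) (map w as))"
  using assms by (induction as) auto

lemma set_prods: "set (concat (map (\<lambda>a. map (mul B a) bs) as)) = {mul B a b | a b. a \<in> set as \<and> b \<in> set bs}"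
  by auto

lemma homF_hom:
  assumes idS: "idem_srng S" and wV: "w \<in> Val B k \<alpha> S"
  shows "homF S w \<in> An_Hom B k \<alpha> S"
proof -
  have csS: "comm_srng S" using idS by (simp add: idem_srng_def)
  have F: "homF S w (span B k \<alpha> (set as)) = sumlist S (map w as)" if "set as \<subseteq> bul B" for as
    using homF_eq[OF idS wV that] .
  have ext: "homF S w \<in> extensional (An B k \<alpha>)" unfolding homF_def by simp
  have hom: "srng_hom (An_srng B k \<alpha>) S (homF S w)"
    unfolding srng_hom_def
  proof (intro conjI ballI)
    fix x assume "x \<in> car (An_srng B k \<alpha>)"
    hence "x \<in> An B k \<alpha>" by (simp add: An_srng_def)
    then obtain as where as: "set as \<subseteq> bul B" "x = span B k \<alpha> (set as)" by (rule An_obtain)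
    show "homF S w x \<in> car S" using F[OF as(1)] as(2) sumlist_car[OF csS wcars[OF idS wV as(1)]] by simp
  next
    have "homF S w (span B k \<alpha> (set [])) = zer S" using F[of "[]"] by simp
    thus "homF S w (zer (An_srng B k \<alpha>)) = zer S" by (simp add: An_srng_def)
  next
    have "homF S w (span B k \<alpha> (set [one B])) = one S" using F[of "[one B]"] w1[OF idS wV] csS by simp
    thus "homF S w (one (An_srng B k \<alpha>)) = one S" by (simp add: An_srng_def)
  next
    fix x y assume "x \<in> car (An_srng B k \<alpha>)" "y \<in> car (An_srng B k \<alpha>)"
    hence "x \<in> An B k \<alpha>" "y \<in> An B k \<alpha>" by (simp_all add: An_srng_def)
    then obtain as bs where as: "set as \<subseteq> bul B" "x = span B k \<alpha> (set as)"
      and bs: "set bs \<subseteq> bul B" "y = span B k \<alpha> (set bs)" by (metis An_obtain)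
    have cas: "set (map w as) \<subseteq> car S" and cbs: "set (map w bs) \<subseteq> car S"
      using wcars[OF idS wV as(1)] wcars[OF idS wV bs(1)] .
    have "An_add B x y = span B k \<alpha> (set (as @ bs))"
      using An_add_span[OF as(1) bs(1)] as(2) bs(2) by simp
    moreover have "homF S w (span B k \<alpha> (set (as @ bs))) = sumlist S (map w (as @ bs))"
      using as bs by (intro F) auto
    ultimately have "homF S w (An_add B x y) = sumlist S (map w (as @ bs))" by simp
    also have "\<dots> = add S (homF S w x) (homF S w y)"
      using sumlist_append[OF csS cas cbs] F as bs by simp
    finally show "homF S w (add (An_srng B k \<alpha>) x y) = add S (homF S w x) (homF S w y)"
      by (simp add: An_srng_def)
    let ?cs = "concat (map (\<lambda>a. map (mul B a) bs) as)"
    have csb: "set ?cs \<subseteq> bul B" using as bs by (auto simp: subset_iff)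
    have "smul B (set as) (set bs) = set ?cs - {zer B}" unfolding smul_def set_prods by simp
    hence "An_mul B x y = span B k \<alpha> (set ?cs)"
      using An_mul_span[OF as(1) bs(1)] as(2) bs(2) span_minus0[OF csb] by simp
    hence "homF S w (An_mul B x y) = sumlist S (map w ?cs)" using F[OF csb] by simp
    also have "map w ?cs = concat (map (\<lambda>x. map (mul S x) (map w bs)) (map w as))"
      using wmul[OF idS wV] as bs by (intro concat_map_w) blast
    also have "sumlist S \<dots> = mul S (sumlist S (map w as)) (sumlist S (map w bs))"
      using sumlist_double[OF csS cas cbs] .
    also have "\<dots> = mul S (homF S w x) (homF S w y)" using F as bs by simp
    finally show "homF S w (mul (An_srng B k \<alpha>) x y) = mul S (homF S w x) (homF S w y)"
      by (simp add: An_srng_def)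
  qed
  show ?thesis unfolding An_Hom_def using ext hom by simp
qed

lemma val_of_homF:
  assumes idS: "idem_srng S" and wV: "w \<in> Val B k \<alpha> S"
  shows "val_of_hom B k \<alpha> (homF S w) = w"
proof (rule extensionalityI[OF _ wext[OF idS wV]])
  show "val_of_hom B k \<alpha> (homF S w) \<in> extensional (bul B)" unfolding val_of_hom_def by simp
  fix a assume a: "a \<in> bul B"
  have csS: "comm_srng S" using idS by (simp add: idem_srng_def)
  have "homF S w (span B k \<alpha> (set [a])) = sumlist S (map w [a])" using homF_eq[OF idS wV, of "[a]"] a by simp
  hence "homF S w (span B k \<alpha> {a}) = add S (w a) (zer S)" by simp
  thus "val_of_hom B k \<alpha> (homF S w) a = w a" unfolding val_of_hom_def using a wcar[OF idS wV a] csS by simp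
qed

lemma An_single: "a \<in> bul B \<Longrightarrow> span B k \<alpha> {a} \<in> An B k \<alpha>"
  using An_span[of "[a]"] by simp

context
  fixes S :: "('s, 'p) srng_scheme" and f :: "'b set \<Rightarrow> 's"
  assumes fH: "f \<in> An_Hom B k \<alpha> S"
begin

lemma fext: "f \<in> extensional (An B k \<alpha>)" using fH by (simp add: An_Hom_def)
lemma fhom: "srng_hom (An_srng B k \<alpha>) S f" using fH by (simp add: An_Hom_def)
lemma fcar: "M \<in> An B k \<alpha> \<Longrightarrow> f M \<in> car S"
  using fhom unfolding srng_hom_def An_srng_def by simp
lemma fzer: "f (span B k \<alpha> {}) = zer S"
  using fhom unfolding srng_hom_def An_srng_def by simp
lemma fone: "f (span B k \<alpha> {one B}) = one S"
  using fhom unfolding srng_hom_def An_srng_def by simp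
lemma fadd: "x \<in> An B k \<alpha> \<Longrightarrow> y \<in> An B k \<alpha> \<Longrightarrow> f (An_add B x y) = add S (f x) (f y)"
  using fhom unfolding srng_hom_def An_srng_def by simp
lemma fmul: "x \<in> An B k \<alpha> \<Longrightarrow> y \<in> An B k \<alpha> \<Longrightarrow> f (An_mul B x y) = mul S (f x) (f y)"
  using fhom unfolding srng_hom_def An_srng_def by simp

lemma f_sum: "set as \<subseteq> bul B \<Longrightarrow> f (span B k \<alpha> (set as)) = sumlist S (map (\<lambda>a. f (span B k \<alpha> {a})) as)"
proof (induction as)
  case Nil thus ?case using fzer by simp
next
  case (Cons a as)
  have a: "a \<in> bul B" and as: "set as \<subseteq> bul B" using Cons.prems by auto
  have "span B k \<alpha> (set (a # as)) = An_add B (span B k \<alpha> {a}) (span B k \<alpha> (set as))"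
    using An_add_span[of "{a}" "set as"] a as by simp
  hence "f (span B k \<alpha> (set (a # as))) = add S (f (span B k \<alpha> {a})) (f (span B k \<alpha> (set as)))"
    using fadd[OF An_single[OF a] An_span[OF as]] by simp
  thus ?case using Cons.IH[OF as] by simp
qed

lemma val_of_hom_Val: "val_of_hom B k \<alpha> f \<in> Val B k \<alpha> S"
proof -
  let ?w = "val_of_hom B k \<alpha> f"
  have wa: "?w a = f (span B k \<alpha> {a})" if "a \<in> bul B" for a using that by (simp add: val_of_hom_def)
  have ext: "?w \<in> extensional (bul B)" by (simp add: val_of_hom_def)
  have car: "\<forall>a\<in>bul B. ?w a \<in> car S" using wa fcar An_single by simp
  have z: "?w (zer B) = zer S"
  proof -
    have "span B k \<alpha> {zer B} = span B k \<alpha> {}" using span_minus0[of "{zer B}"] by simp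
    thus ?thesis using wa[OF zer_bul] fzer by simp
  qed
  have o: "?w (one B) = one S" using wa[OF one_bul] fone by simp
  have m: "\<forall>a\<in>bul B. \<forall>b\<in>bul B. ?w (mul B a b) = mul S (?w a) (?w b)"
  proof (intro ballI)
    fix a b assume a: "a \<in> bul B" and b: "b \<in> bul B"
    have "smul B {a} {b} = {mul B a b} - {zer B}" by (auto simp: smul_def)
    hence "An_mul B (span B k \<alpha> {a}) (span B k \<alpha> {b}) = span B k \<alpha> {mul B a b}"
      using An_mul_span[of "{a}" "{b}"] a b span_minus0[of "{mul B a b}"] by simp
    hence "f (span B k \<alpha> {mul B a b}) = mul S (f (span B k \<alpha> {a})) (f (span B k \<alpha> {b}))"
      using fmul[OF An_single[OF a] An_single[OF b]] by simp
    thus "?w (mul B a b) = mul S (?w a) (?w b)" using wa a b by simp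
  qed
  have v: "\<forall>a bs. a \<in> bul B \<longrightarrow> set bs \<subseteq> bul B \<longrightarrow> le B a (sumlist B bs) \<longrightarrow>
          add S (?w a) (sumlist S (map ?w bs)) = sumlist S (map ?w bs)"
  proof (intro allI impI)
    fix a bs assume a: "a \<in> bul B" and bs: "set bs \<subseteq> bul B" and l: "le B a (sumlist B bs)"
    have mw: "map ?w bs = map (\<lambda>b. f (span B k \<alpha> {b})) bs" using bs wa by auto
    have ain: "a \<in> span B k \<alpha> (set bs)" using span_down[OF bs a _ l] span_sub[OF bs] by blast
    have "An_add B (span B k \<alpha> {a}) (span B k \<alpha> (set bs)) = span B k \<alpha> ({a} \<union> set bs)"
      using An_add_span[of "{a}" "set bs"] a bs by simp
    also have "\<dots> = span B k \<alpha> (set bs)"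
    proof (rule span_eqI)
      show "{a} \<union> set bs \<subseteq> bul B" "set bs \<subseteq> bul B" using a bs by auto
      show "{a} \<union> set bs \<subseteq> span B k \<alpha> (set bs)" using ain span_sub[OF bs] by blast
      show "set bs \<subseteq> span B k \<alpha> ({a} \<union> set bs)" using span_sub[of "{a} \<union> set bs"] a bs by blast
    qed
    finally have "f (span B k \<alpha> (set bs)) = add S (f (span B k \<alpha> {a})) (f (span B k \<alpha> (set bs)))"
      using fadd[OF An_single[OF a] An_span[OF bs]] by simp
    hence h: "add S (f (span B k \<alpha> {a})) (sumlist S (map (\<lambda>b. f (span B k \<alpha> {b})) bs))
        = sumlist S (map (\<lambda>b. f (span B k \<alpha> {b})) bs)" using f_sum[OF bs] by simp
    show "add S (?w a) (sumlist S (map ?w bs)) = sumlist S (map ?w bs)"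
      unfolding mw wa[OF a] using h .
  qed
  have i: "\<forall>c\<in>bul k. add S (?w (\<alpha> c)) (one S) = one S"
  proof
    fix c assume c: "c \<in> bul k"
    have ab: "\<alpha> c \<in> bul B" using c by simp
    have "one B \<in> span B k \<alpha> {one B}" using span_sub[of "{one B}"] by simp
    hence "mul B (\<alpha> c) (one B) \<in> span B k \<alpha> {one B}" using span_alpha[of "{one B}" c "one B"] c by simp
    hence ain: "\<alpha> c \<in> span B k \<alpha> {one B}" using ab by simp
    have "An_add B (span B k \<alpha> {\<alpha> c}) (span B k \<alpha> {one B}) = span B k \<alpha> ({\<alpha> c} \<union> {one B})"
      using An_add_span[of "{\<alpha> c}" "{one B}"] ab by simp
    also have "\<dots> = span B k \<alpha> {one B}"
    proof (rule span_eqI)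
      show "{\<alpha> c} \<union> {one B} \<subseteq> bul B" "{one B} \<subseteq> bul B" using ab by auto
      show "{\<alpha> c} \<union> {one B} \<subseteq> span B k \<alpha> {one B}" using ain span_sub[of "{one B}"] by simp
      show "{one B} \<subseteq> span B k \<alpha> ({\<alpha> c} \<union> {one B})" using span_sub[of "{\<alpha> c} \<union> {one B}"] ab one_bul by blast
    qed
    finally have "f (span B k \<alpha> {one B}) = add S (f (span B k \<alpha> {\<alpha> c})) (f (span B k \<alpha> {one B}))"
      using fadd[OF An_single[OF ab] An_single[OF one_bul]] by simp
    thus "add S (?w (\<alpha> c)) (one S) = one S" using wa[OF ab] fone by simp
  qed
  show ?thesis unfolding Val_def using ext car z o m v i by blast
qed

end

lemma val_inj: "inj_on (val_of_hom B k \<alpha>) (An_Hom B k \<alpha> S)"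
proof (rule inj_onI)
  fix f g assume f: "f \<in> An_Hom B k \<alpha> S" and g: "g \<in> An_Hom B k \<alpha> S"
    and eq: "val_of_hom B k \<alpha> f = val_of_hom B k \<alpha> g"
  have s: "f (span B k \<alpha> {a}) = g (span B k \<alpha> {a})" if "a \<in> bul B" for a
    using fun_cong[OF eq, of a] that by (simp add: val_of_hom_def)
  show "f = g"
  proof (rule extensionalityI[OF fext[OF f] fext[OF g]])
    fix M assume "M \<in> An B k \<alpha>"
    then obtain as where as: "set as \<subseteq> bul B" "M = span B k \<alpha> (set as)" by (rule An_obtain)
    have "f M = sumlist S (map (\<lambda>a. f (span B k \<alpha> {a})) as)" using f_sum[OF f as(1)] as(2) by simp
    also have "map (\<lambda>a. f (span B k \<alpha> {a})) as = map (\<lambda>a. g (span B k \<alpha> {a})) as"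
      using s as by (intro map_cong) auto
    also have "sumlist S (map (\<lambda>a. g (span B k \<alpha> {a})) as) = g M" using f_sum[OF g as(1)] as(2) by simp
    finally show "f M = g M" .
  qed
qed

lemma val_bij: "idem_srng S \<Longrightarrow> bij_betw (val_of_hom B k \<alpha>) (An_Hom B k \<alpha> S) (Val B k \<alpha> S)"
proof -
  assume idS: "idem_srng S"
  show ?thesis unfolding bij_betw_def
  proof
    show "inj_on (val_of_hom B k \<alpha>) (An_Hom B k \<alpha> S)" by (rule val_inj)
    show "val_of_hom B k \<alpha> ` An_Hom B k \<alpha> S = Val B k \<alpha> S"
    proof
      show "val_of_hom B k \<alpha> ` An_Hom B k \<alpha> S \<subseteq> Val B k \<alpha> S" using val_of_hom_Val by blast
      show "Val B k \<alpha> S \<subseteq> val_of_hom B k \<alpha> ` An_Hom B k \<alpha> S"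
      proof
        fix w assume wV: "w \<in> Val B k \<alpha> S"
        have "w = val_of_hom B k \<alpha> (homF S w)" using val_of_homF[OF idS wV] by simp
        thus "w \<in> val_of_hom B k \<alpha> ` An_Hom B k \<alpha> S" using homF_hom[OF idS wV] by blast
      qed
    qed
  qed
qed

lemma val_nat: "f \<in> An_Hom B k \<alpha> S \<Longrightarrow>
   val_of_hom B k \<alpha> (restrict (g \<circ> f) (An B k \<alpha>)) = restrict (g \<circ> val_of_hom B k \<alpha> f) (bul B)"
proof (rule ext)
  fix a
  show "val_of_hom B k \<alpha> (restrict (g \<circ> f) (An B k \<alpha>)) a = restrict (g \<circ> val_of_hom B k \<alpha> f) (bul B) a"
    by (cases "a \<in> bul B") (simp_all add: val_of_hom_def An_single)
qed

end


theorem theoremG: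
  fixes k :: "'k obp" and B :: "'b obp" and \<alpha> :: "'k \<Rightarrow> 'b"
  assumes "ordered_blueprint k" and "ordered_blueprint B" and "obp_hom k B \<alpha>"
  shows "(\<exists>\<phi>. bij_betw \<phi> (An B k \<alpha>) (car (Bend_srng B k \<alpha>)) \<and>
              srng_hom (An_srng B k \<alpha>) (Bend_srng B k \<alpha>) \<phi> \<and>
              (\<forall>a\<in>bul B. \<phi> (span B k \<alpha> {a}) = bend_rel B k \<alpha> `` {semb B a}))
       \<and> (\<forall>S :: 's srng. idem_srng S \<longrightarrow>
              bij_betw (val_of_hom B k \<alpha>) (An_Hom B k \<alpha> S) (Val B k \<alpha> S))
       \<and> (\<forall>(S :: 's srng) (T :: 't srng) g f. idem_srng S \<longrightarrow> idem_srng T \<longrightarrow>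
              srng_hom S T g \<longrightarrow> f \<in> An_Hom B k \<alpha> S \<longrightarrow>
              val_of_hom B k \<alpha> (restrict (g \<circ> f) (An B k \<alpha>))
                = restrict (g \<circ> val_of_hom B k \<alpha> f) (bul B))"
proof -
  interpret ctx B k \<alpha> by (rule ctx.intro) (rule assms)+
  have 1: "\<exists>\<phi>. bij_betw \<phi> (An B k \<alpha>) (car (Bend_srng B k \<alpha>)) \<and>
              srng_hom (An_srng B k \<alpha>) (Bend_srng B k \<alpha>) \<phi> \<and>
              (\<forall>a\<in>bul B. \<phi> (span B k \<alpha> {a}) = bend_rel B k \<alpha> `` {semb B a})"
    by (rule iso)
  have 2: "\<forall>S :: 's srng. idem_srng S \<longrightarrow>
              bij_betw (val_of_hom B k \<alpha>) (An_Hom B k \<alpha> S) (Val B k \<alpha> S)"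
    using val_bij by blast
  have 3: "\<forall>(S :: 's srng) (T :: 't srng) g f. idem_srng S \<longrightarrow> idem_srng T \<longrightarrow>
              srng_hom S T g \<longrightarrow> f \<in> An_Hom B k \<alpha> S \<longrightarrow>
              val_of_hom B k \<alpha> (restrict (g \<circ> f) (An B k \<alpha>))
                = restrict (g \<circ> val_of_hom B k \<alpha> f) (bul B)"
    using val_nat by blast
  show ?thesis using 1 2 3 by blast
qed

end
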